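(* Let $n,k$ be positive integers. Define $\varphi:[(k+1)n]\to[kn]$ by $\varphi(x)=x-\lfloor (x-1)/(k+1)\rfloor$ for $x<n(k+1)$ and $\varphi(n(k+1))=1$; thus $\varphi$ identifies exactly the pairs $\{k+1,k+2\},\{2(k+1),2(k+1)+1\},\dots,\{(n-1)(k+1),(n-1)(k+1)+1\},\{n(k+1),1\}$ and preserves the cyclic order otherwise. For $\pi\in NC_{k+1}(n)$ let $f(\pi)$ be the finest partition of $[kn]$ such that for every block $V\in\pi$ the set $\varphi(V)$ is contained in a single block of $f(\pi)$. Then $f(\pi)\in NC^k(n)$ for all $\pi\in NC_{k+1}(n)$, and $f:NC_{k+1}(n)\to NC^k(n)$ is a bijection.
   Context: A partition $\pi$ of $[N]=\{1,\dots,N\}$ is non-crossing if there are no $1\le a<b<c<d\le N$ with $a,c$ in one block and $b,d$ in another. $NC^k(n)$ is the set of non-crossing partitions of $[kn]$ all of whose blocks have size divisible by $k$. $NC_{k+1}(n)$ is the set of non-crossing partitions of $[(k+1)n]$ all of whose blocks have size exactly $k+1$. *)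

theory Defs
  imports "HOL-Library.Disjoint_Sets"
begin

definition noncrossing :: "nat set set \<Rightarrow> bool" where
  "noncrossing P \<longleftrightarrow>
     \<not> (\<exists>a b c d B1 B2. B1 \<in> P \<and> B2 \<in> P \<and> B1 \<noteq> B2 \<and> a < b \<and> b < c \<and> c < d \<and>
           a \<in> B1 \<and> c \<in> B1 \<and> b \<in> B2 \<and> d \<in> B2)"

definition NC_upper :: "nat \<Rightarrow> nat \<Rightarrow> nat set set set" where
  "NC_upper k n = {P. partition_on {1..k*n} P \<and> noncrossing P \<and> (\<forall>B\<in>P. k dvd card B)}"

definition NC_lower :: "nat \<Rightarrow> nat \<Rightarrow> nat set set set" where
  "NC_lower m n = {P. partition_on {1..m*n} P \<and> noncrossing P \<and> (\<forall>B\<in>P. card B = m)}"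

definition phi :: "nat \<Rightarrow> nat \<Rightarrow> nat \<Rightarrow> nat" where
  "phi k n x = (if x < n*(k+1) then x - (x - 1) div (k+1) else 1)"

definition refines :: "'a set set \<Rightarrow> 'a set set \<Rightarrow> bool" where
  "refines P Q \<longleftrightarrow> (\<forall>B\<in>P. \<exists>C\<in>Q. B \<subseteq> C)"

definition compatible :: "nat \<Rightarrow> nat \<Rightarrow> nat set set \<Rightarrow> nat set set \<Rightarrow> bool" where
  "compatible k n \<pi> \<sigma> \<longleftrightarrow> partition_on {1..k*n} \<sigma> \<and> (\<forall>V\<in>\<pi>. \<exists>B\<in>\<sigma>. phi k n ` V \<subseteq> B)"

definition fmap :: "nat \<Rightarrow> nat \<Rightarrow> nat set set \<Rightarrow> nat set set" where
  "fmap k n \<pi> = (THE \<sigma>. compatible k n \<pi> \<sigma> \<and> (\<forall>\<tau>. compatible k n \<pi> \<tau> \<longrightarrow> refines \<sigma> \<tau>))"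

end

theory Submission
  imports Defs
begin


definition sh :: "nat \<Rightarrow> nat \<Rightarrow> nat \<Rightarrow> nat" where
  "sh L a x = (if x < a then x else x + L)"
definition ush :: "nat \<Rightarrow> nat \<Rightarrow> nat \<Rightarrow> nat" where
  "ush L a y = (if y < a then y else y - L)"

lemma sh_less_iff[simp]: "sh L a x < sh L a y \<longleftrightarrow> x < y"
  by (auto simp: sh_def)
lemma sh_eq_iff[simp]: "sh L a x = sh L a y \<longleftrightarrow> x = y"
  by (auto simp: sh_def)
lemma sh_le_iff[simp]: "sh L a x \<le> sh L a y \<longleftrightarrow> x \<le> y"
  by (auto simp: sh_def)
lemma ush_sh[simp]: "ush L a (sh L a x) = x"
  by (auto simp: sh_def ush_def)
lemma sh_ush: "y \<notin> {a..<a+L} \<Longrightarrow> sh L a (ush L a y) = y"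
  by (auto simp: sh_def ush_def)
lemma sh_notin: "sh L a x \<notin> {a..<a+L}"
  by (auto simp: sh_def)
lemma inj_sh: "inj_on (sh L a) A"
  by (auto simp: inj_on_def)
lemma sh_image_interval:
  assumes "1 \<le> a" "a \<le> M+1"
  shows "sh L a ` {1..M} = {1..M+L} - {a..<a+L}"
proof -
  have "y \<in> sh L a ` {1..M}" if "y \<in> {1..M+L} - {a..<a+L}" for y
    using that assms by (intro image_eqI[of _ _ "ush L a y"]) (auto simp: sh_def ush_def)
  moreover have "sh L a ` {1..M} \<subseteq> {1..M+L} - {a..<a+L}"
    using assms by (auto simp: sh_def)
  ultimately show ?thesis by blast
qed

lemma partition_same_block:
  "partition_on A P \<Longrightarrow> B \<in> P \<Longrightarrow> C \<in> P \<Longrightarrow> x \<in> B \<Longrightarrow> x \<in> C \<Longrightarrow> B = C"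
  unfolding partition_on_def disjoint_def by blast

lemma partition_block_sub: "partition_on A P \<Longrightarrow> B \<in> P \<Longrightarrow> B \<subseteq> A"
  unfolding partition_on_def by blast

lemma partition_ex_block: "partition_on A P \<Longrightarrow> x \<in> A \<Longrightarrow> \<exists>B\<in>P. x \<in> B"
  unfolding partition_on_def by blast

lemma partition_nonempty: "partition_on A P \<Longrightarrow> B \<in> P \<Longrightarrow> B \<noteq> {}"
  unfolding partition_on_def by blast

lemma noncrossingI:
  assumes "\<And>a b c d B1 B2. B1 \<in> P \<Longrightarrow> B2 \<in> P \<Longrightarrow> B1 \<noteq> B2 \<Longrightarrow> a < b \<Longrightarrow> b < c \<Longrightarrow> c < d \<Longrightarrow>
           a \<in> B1 \<Longrightarrow> c \<in> B1 \<Longrightarrow> b \<in> B2 \<Longrightarrow> d \<in> B2 \<Longrightarrow> False"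
  shows "noncrossing P"
  using assms unfolding noncrossing_def by blast

lemma noncrossingD:
  "noncrossing P \<Longrightarrow> B1 \<in> P \<Longrightarrow> B2 \<in> P \<Longrightarrow> B1 \<noteq> B2 \<Longrightarrow> a < b \<Longrightarrow> b < c \<Longrightarrow> c < d \<Longrightarrow>
           a \<in> B1 \<Longrightarrow> c \<in> B1 \<Longrightarrow> b \<in> B2 \<Longrightarrow> d \<in> B2 \<Longrightarrow> False"
  unfolding noncrossing_def by blast

section \<open>Inserting an interval block\<close>

definition insb :: "nat \<Rightarrow> nat \<Rightarrow> nat set set \<Rightarrow> nat set set" where
  "insb L a P = insert {a..<a+L} ((`) (sh L a) ` P)"
definition remb :: "nat \<Rightarrow> nat \<Rightarrow> nat set set \<Rightarrow> nat set set" where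
  "remb L a P = (`) (ush L a) ` (P - {{a..<a+L}})"

lemma insb_partition:
  assumes P: "partition_on {1..M} P" and "1 \<le> a" "a \<le> M+1" "0 < L"
  shows "partition_on {1..M+L} (insb L a P)"
proof -
  have "partition_on (sh L a ` {1..M}) ((`) (sh L a) ` P - {{}})"
    by (rule partition_on_inj_image[OF P inj_sh])
  moreover have "(`) (sh L a) ` P - {{}} = (`) (sh L a) ` P"
    using partition_onD3[OF P] by auto
  ultimately have "partition_on ({1..M+L} - {a..<a+L}) ((`) (sh L a) ` P)"
    using sh_image_interval[OF assms(2,3)] by simp
  then show ?thesis unfolding insb_def
    using assms sh_notin[of L a] by (subst partition_on_insert) (auto simp: disjnt_def)
qed

lemma insb_noncrossing:
  assumes "noncrossing P"
  shows "noncrossing (insb L a P)"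
proof (rule noncrossingI)
  fix x y z w B1 B2
  assume B: "B1 \<in> insb L a P" "B2 \<in> insb L a P" "B1 \<noteq> B2" "x < y" "y < z" "z < w"
    "x \<in> B1" "z \<in> B1" "y \<in> B2" "w \<in> B2"
  show False
  proof (cases "B1 = {a..<a+L}")
    case True
    then have "B2 \<noteq> {a..<a+L}" using B by auto
    then obtain C2 where "C2 \<in> P" "B2 = sh L a ` C2" using B unfolding insb_def by auto
    then obtain y' where "y = sh L a y'" using B by auto
    moreover have "y \<in> {a..<a+L}" using B True by auto
    ultimately show False using sh_notin[of L a y'] by simp
  next
    case F1: False
    then obtain C1 where C1: "C1 \<in> P" "B1 = sh L a ` C1" using B unfolding insb_def by auto
    show False
    proof (cases "B2 = {a..<a+L}")
      case True
      obtain z' where "z = sh L a z'" using B C1 by auto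
      moreover have "z \<in> {a..<a+L}" using B True by auto
      ultimately show False using sh_notin[of L a z'] by simp
    next
      case False
      then obtain C2 where C2: "C2 \<in> P" "B2 = sh L a ` C2" using B unfolding insb_def by auto
      obtain x' z' where "x' \<in> C1" "z' \<in> C1" "x = sh L a x'" "z = sh L a z'" using B C1 by auto
      moreover obtain y' w' where "y' \<in> C2" "w' \<in> C2" "y = sh L a y'" "w = sh L a w'" using B C2 by auto
      moreover have "C1 \<noteq> C2" using B C1 C2 by auto
      ultimately show False using B C1 C2 noncrossingD[OF assms, of C1 C2 x' y' z' w'] by auto
    qed
  qed
qed

lemma insb_cards:
  assumes "B \<in> insb L a P"
  shows "B = {a..<a+L} \<or> (\<exists>C\<in>P. B = sh L a ` C \<and> card B = card C)"
  using assms unfolding insb_def by (auto simp: card_image[OF inj_sh])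


locale rembloc =
  fixes M L a :: nat and P :: "nat set set"
  assumes P: "partition_on {1..M+L} P" and I: "{a..<a+L} \<in> P" and a1: "1 \<le> a" and a2: "a \<le> M+1" and L0: "0 < L"
begin

lemma avoid: "B \<in> P - {{a..<a+L}} \<Longrightarrow> B \<inter> {a..<a+L} = {}"
  using I P unfolding partition_on_def disjoint_def by blast

lemma inj_ush: "inj_on (ush L a) ({1..M+L} - {a..<a+L})"
  by (rule inj_on_inverseI[where g = "sh L a"]) (auto simp: sh_ush)

lemma injB: "B \<in> P - {{a..<a+L}} \<Longrightarrow> inj_on (ush L a) B"
  by (rule inj_on_subset[OF inj_ush]) (use avoid partition_block_sub[OF P] in blast)

lemma shush: "B \<in> P - {{a..<a+L}} \<Longrightarrow> sh L a ` (ush L a ` B) = B"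
proof -
  assume B: "B \<in> P - {{a..<a+L}}"
  have "\<And>y. y \<in> B \<Longrightarrow> sh L a (ush L a y) = y" using avoid[OF B] sh_ush[of _ a L] by blast
  then show ?thesis by (force simp: image_image)
qed

lemma eq: "P = insb L a (remb L a P)"
proof
  show "P \<subseteq> insb L a (remb L a P)"
  proof
    fix B assume "B \<in> P"
    show "B \<in> insb L a (remb L a P)"
    proof (cases "B = {a..<a+L}")
      case True then show ?thesis unfolding insb_def by simp
    next
      case False
      then have "B \<in> P - {{a..<a+L}}" using \<open>B \<in> P\<close> by simp
      then have "sh L a ` (ush L a ` B) \<in> insb L a (remb L a P)" unfolding insb_def remb_def by blast
      then show ?thesis using shush \<open>B \<in> P - {{a..<a+L}}\<close> by simp
    qed
  qed
  show "insb L a (remb L a P) \<subseteq> P"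
  proof
    fix C assume "C \<in> insb L a (remb L a P)"
    then consider "C = {a..<a+L}" | B where "B \<in> P - {{a..<a+L}}" "C = sh L a ` (ush L a ` B)"
      unfolding insb_def remb_def by blast
    then show "C \<in> P" using I shush by cases auto
  qed
qed

lemma Pr: "partition_on ({1..M+L} - {a..<a+L}) (P - {{a..<a+L}})"
proof -
  have U: "\<Union>P = {1..M+L}" using P unfolding partition_on_def by simp
  have "\<Union>(P - {{a..<a+L}}) = {1..M+L} - {a..<a+L}"
  proof
    show "\<Union>(P - {{a..<a+L}}) \<subseteq> {1..M+L} - {a..<a+L}"
      using avoid U by blast
    show "{1..M+L} - {a..<a+L} \<subseteq> \<Union>(P - {{a..<a+L}})"
    proof
      fix x assume x: "x \<in> {1..M+L} - {a..<a+L}"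
      then obtain B where "B \<in> P" "x \<in> B" using U by blast
      then show "x \<in> \<Union>(P - {{a..<a+L}})" using x by blast
    qed
  qed
  moreover have "disjoint (P - {{a..<a+L}})" using partition_onD2[OF P] by (rule pairwise_subset) blast
  moreover have "{} \<notin> P - {{a..<a+L}}" using partition_onD3[OF P] by blast
  ultimately show ?thesis unfolding partition_on_def by blast
qed

lemma part: "partition_on {1..M} (remb L a P)"
proof -
  from partition_on_inj_image[OF Pr inj_ush]
  have "partition_on (ush L a ` ({1..M+L} - {a..<a+L})) ((`) (ush L a) ` (P - {{a..<a+L}}) - {{}})" .
  moreover have "ush L a ` ({1..M+L} - {a..<a+L}) = {1..M}"
  proof -
    have "ush L a ` ({1..M+L} - {a..<a+L}) = ush L a ` (sh L a ` {1..M})"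
      using sh_image_interval[OF a1 a2] by simp
    also have "\<dots> = {1..M}" by (simp add: image_image)
    finally show ?thesis .
  qed
  moreover have "{} \<notin> (`) (ush L a) ` (P - {{a..<a+L}})" using partition_onD3[OF P] by auto
  ultimately show ?thesis unfolding remb_def by simp
qed

lemma cards: "C \<in> remb L a P \<Longrightarrow> \<exists>B\<in>P. C = ush L a ` B \<and> card C = card B"
proof -
  assume "C \<in> remb L a P"
  then obtain B where B: "B \<in> P - {{a..<a+L}}" "C = ush L a ` B" unfolding remb_def by blast
  then have "card C = card B" using card_image[OF injB[OF B(1)]] by simp
  then show ?thesis using B by blast
qed

lemma nc: "noncrossing P \<Longrightarrow> noncrossing (remb L a P)"
proof (rule noncrossingI)
  fix x y z w B1 B2
  assume nc: "noncrossing P"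
  assume B: "B1 \<in> remb L a P" "B2 \<in> remb L a P" "B1 \<noteq> B2" "x < y" "y < z" "z < w"
    "x \<in> B1" "z \<in> B1" "y \<in> B2" "w \<in> B2"
  obtain C1 where C1: "C1 \<in> P - {{a..<a+L}}" "B1 = ush L a ` C1" using B unfolding remb_def by auto
  obtain C2 where C2: "C2 \<in> P - {{a..<a+L}}" "B2 = ush L a ` C2" using B unfolding remb_def by auto
  have "sh L a ` B1 = C1" "sh L a ` B2 = C2" using shush C1 C2 by auto
  then have "sh L a x \<in> C1" "sh L a z \<in> C1" "sh L a y \<in> C2" "sh L a w \<in> C2" using B by auto
  moreover have "C1 \<noteq> C2" using B C1 C2 by auto
  ultimately show False using noncrossingD[OF nc, of C1 C2 "sh L a x" "sh L a y" "sh L a z" "sh L a w"] B C1 C2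
    by auto
qed

end




section \<open>Extending the block containing p\<close>

definition extB :: "nat \<Rightarrow> nat \<Rightarrow> nat set \<Rightarrow> nat set" where
  "extB L p B = sh L (p+1) ` B \<union> (if p \<in> B then {p+1..<p+1+L} else {})"
definition extb :: "nat \<Rightarrow> nat \<Rightarrow> nat set set \<Rightarrow> nat set set" where
  "extb L p P = extB L p ` P"
definition rexB :: "nat \<Rightarrow> nat \<Rightarrow> nat set \<Rightarrow> nat set" where
  "rexB L p B = ush L (p+1) ` (B - {p+1..<p+1+L})"
definition rexb :: "nat \<Rightarrow> nat \<Rightarrow> nat set set \<Rightarrow> nat set set" where
  "rexb L p P = rexB L p ` P"

definition prj :: "nat \<Rightarrow> nat \<Rightarrow> nat \<Rightarrow> nat" where
  "prj L p y = (if y \<in> {p+1..<p+1+L} then p else ush L (p+1) y)"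

lemma prj_mono: "y \<le> y' \<Longrightarrow> prj L p y \<le> prj L p y'"
  by (auto simp: prj_def ush_def)

lemma prj_extB: "y \<in> extB L p B \<Longrightarrow> prj L p y \<in> B"
  by (auto simp: extB_def prj_def sh_def ush_def split: if_splits)

lemma sh_in_extB: "x \<in> B \<Longrightarrow> sh L (p+1) x \<in> extB L p B"
  by (auto simp: extB_def)

lemma extB_inj:
  assumes "partition_on A P" "B \<in> P" "C \<in> P" "extB L p B = extB L p C"
  shows "B = C"
proof -
  have "sh L (p+1) ` B = sh L (p+1) ` C"
  proof -
    have "sh L (p+1) ` B = extB L p B - {p+1..<p+1+L}"
      using sh_notin[of L "p+1"] by (auto simp: extB_def)
    also have "\<dots> = extB L p C - {p+1..<p+1+L}" using assms by simp
    also have "\<dots> = sh L (p+1) ` C"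
      using sh_notin[of L "p+1"] by (auto simp: extB_def)
    finally show ?thesis .
  qed
  then show ?thesis using inj_image_eq_iff[OF inj_sh[of L "p+1" UNIV]] by (simp add: inj_on_def)
qed

lemma extb_partition:
  assumes P: "partition_on {1..M} P" and p: "1 \<le> p" "p \<le> M"
  shows "partition_on {1..M+L} (extb L p P)"
proof (rule partition_onI)
  have U: "\<Union>P = {1..M}" using P by (simp add: partition_on_def)
  show "\<Union>(extb L p P) = {1..M+L}"
  proof
    show "\<Union>(extb L p P) \<subseteq> {1..M+L}"
    proof
      fix y assume "y \<in> \<Union>(extb L p P)"
      then obtain B where B: "B \<in> P" "y \<in> extB L p B" unfolding extb_def by blast
      have "B \<subseteq> {1..M}" using B U by blast
      from B(2) consider x where "x \<in> B" "y = sh L (p+1) x" | "y \<in> {p+1..<p+1+L}"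
        unfolding extB_def by (auto split: if_splits)
      then show "y \<in> {1..M+L}"
      proof cases
        case 1 then show ?thesis using \<open>B \<subseteq> {1..M}\<close> by (auto simp: sh_def)
      next
        case 2 then show ?thesis using p by auto
      qed
    qed
    show "{1..M+L} \<subseteq> \<Union>(extb L p P)"
    proof
      fix y assume y: "y \<in> {1..M+L}"
      show "y \<in> \<Union>(extb L p P)"
      proof (cases "y \<in> {p+1..<p+1+L}")
        case True
        have "p \<in> \<Union>P" using U p by auto
        then obtain B where "B \<in> P" "p \<in> B" by blast
        then have "y \<in> extB L p B" using True unfolding extB_def by simp
        then show ?thesis using \<open>B \<in> P\<close> unfolding extb_def by blast
      next
        case False
        then have "y \<in> {1..M+L} - {p+1..<p+1+L}" using y by blast
        then have "y \<in> sh L (p+1) ` {1..M}" using sh_image_interval[of "p+1" M L] p by simp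
        then obtain x where x: "x \<in> {1..M}" "y = sh L (p+1) x" by blast
        obtain B where "B \<in> P" "x \<in> B" using partition_ex_block[OF P] x by blast
        then have "y \<in> extB L p B" using x unfolding extB_def by simp
        then show ?thesis using \<open>B \<in> P\<close> unfolding extb_def by blast
      qed
    qed
  qed
  show "{} \<notin> extb L p P"
  proof
    assume "{} \<in> extb L p P"
    then obtain B where "B \<in> P" "extB L p B = {}" unfolding extb_def by auto
    then show False using partition_nonempty[OF P] unfolding extB_def by blast
  qed
  fix X Y assume XY: "X \<in> extb L p P" "Y \<in> extb L p P" "X \<noteq> Y"
  then obtain B C where BC: "B \<in> P" "C \<in> P" "X = extB L p B" "Y = extB L p C" unfolding extb_def by blast
  then have "B \<noteq> C" using XY by auto
  then have BCd: "B \<inter> C = {}" using P BC unfolding partition_on_def disjoint_def by blast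
  show "disjnt X Y"
    unfolding disjnt_def
  proof (rule ccontr)
    assume "X \<inter> Y \<noteq> {}"
    then obtain y where "y \<in> X" "y \<in> Y" by blast
    then have "prj L p y \<in> B" "prj L p y \<in> C" using prj_extB BC by auto
    then show False using BCd by blast
  qed
qed

lemma extb_noncrossing:
  assumes P: "partition_on {1..M} P" and nc: "noncrossing P"
  shows "noncrossing (extb L p P)"
proof (rule noncrossingI)
  fix x y z w B1 B2
  assume B: "B1 \<in> extb L p P" "B2 \<in> extb L p P" "B1 \<noteq> B2" "x < y" "y < z" "z < w"
    "x \<in> B1" "z \<in> B1" "y \<in> B2" "w \<in> B2"
  obtain C1 C2 where C: "C1 \<in> P" "C2 \<in> P" "B1 = extB L p C1" "B2 = extB L p C2"
    using B unfolding extb_def by blast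
  have ne: "C1 \<noteq> C2" using C B by auto
  have d: "C1 \<inter> C2 = {}" using P C ne unfolding partition_on_def disjoint_def by blast
  have m: "prj L p x \<in> C1" "prj L p z \<in> C1" "prj L p y \<in> C2" "prj L p w \<in> C2"
    using B C prj_extB by auto
  have "prj L p x \<noteq> prj L p y" "prj L p y \<noteq> prj L p z" "prj L p z \<noteq> prj L p w"
    using m d by auto
  moreover have "prj L p x \<le> prj L p y" "prj L p y \<le> prj L p z" "prj L p z \<le> prj L p w"
    using B by (auto intro: prj_mono)
  ultimately show False using noncrossingD[OF nc C(1,2) ne, of "prj L p x" "prj L p y" "prj L p z" "prj L p w"] m
    by auto
qed

lemma extB_card:
  assumes "finite B"
  shows "card (extB L p B) = card B + (if p \<in> B then L else 0)"
proof -
  have "sh L (p+1) ` B \<inter> {p+1..<p+1+L} = {}" using sh_notin[of L "p+1"] by blast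
  then show ?thesis unfolding extB_def
    using assms by (auto simp: card_Un_disjoint card_image[OF inj_sh])
qed

locale rexloc =
  fixes M L p :: nat and P :: "nat set set" and B0 :: "nat set"
  assumes P: "partition_on {1..M+L} P" and B0: "B0 \<in> P" "p \<in> B0" "{p+1..<p+1+L} \<subseteq> B0"
    and p1: "1 \<le> p" and p2: "p \<le> M"
begin

abbreviation "J \<equiv> {p+1..<p+1+L}"

lemma avoidJ: "B \<in> P \<Longrightarrow> B \<noteq> B0 \<Longrightarrow> B \<inter> J = {}"
  using B0 P unfolding partition_on_def disjoint_def by blast

lemma inj_ush: "inj_on (ush L (p+1)) ({1..M+L} - J)"
  by (rule inj_on_inverseI[where g = "sh L (p+1)"]) (auto simp: sh_ush)

lemma injB: "B \<in> P \<Longrightarrow> inj_on (ush L (p+1)) (B - J)"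
  by (rule inj_on_subset[OF inj_ush]) (use partition_block_sub[OF P] in blast)

lemma shush: "B \<in> P \<Longrightarrow> sh L (p+1) ` (rexB L p B) = B - J"
proof -
  have "\<And>y. y \<in> B - J \<Longrightarrow> sh L (p+1) (ush L (p+1) y) = y" using sh_ush[of _ "p+1" L] by blast
  then show "sh L (p+1) ` (rexB L p B) = B - J" unfolding rexB_def by (force simp: image_image)
qed

lemma p_in_rexB: "B \<in> P \<Longrightarrow> p \<in> rexB L p B \<longleftrightarrow> B = B0"
proof
  assume "B \<in> P" "p \<in> rexB L p B"
  then obtain y where "y \<in> B - J" "p = ush L (p+1) y" unfolding rexB_def by blast
  then have "y = p" by (auto simp: ush_def split: if_splits)
  then show "B = B0" using \<open>y \<in> B - J\<close> \<open>B \<in> P\<close> partition_same_block[OF P _ B0(1)] B0 by blast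
next
  assume "B = B0"
  then show "p \<in> rexB L p B" unfolding rexB_def using B0 by (force simp: ush_def)
qed

lemma eq: "P = extb L p (rexb L p P)"
proof -
  have "extB L p (rexB L p B) = B" if "B \<in> P" for B
  proof -
    have "extB L p (rexB L p B) = (B - J) \<union> (if B = B0 then J else {})"
      unfolding extB_def using shush[OF that] p_in_rexB[OF that] by simp
    also have "\<dots> = B" using B0 avoidJ[OF that] by auto
    finally show ?thesis .
  qed
  then show ?thesis unfolding extb_def rexb_def image_image by simp
qed

lemma part: "partition_on {1..M} (rexb L p P)"
proof -
  have P1: "partition_on ((-J) \<inter> {1..M+L}) ((\<inter>) (-J) ` P - {{}})"
    by (rule partition_on_restrict[OF P])
  have "(\<inter>) (-J) ` P - {{}} = (\<lambda>B. B - J) ` P"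
  proof -
    have "B - J \<noteq> {}" if "B \<in> P" for B
    proof (cases "B = B0")
      case True then show ?thesis using B0 by auto
    next
      case False then show ?thesis using avoidJ[OF that] partition_nonempty[OF P that] by auto
    qed
    then show ?thesis by (auto simp: Diff_eq Int_commute)
  qed
  moreover have "(-J) \<inter> {1..M+L} = {1..M+L} - J" by auto
  ultimately have P2: "partition_on ({1..M+L} - J) ((\<lambda>B. B - J) ` P)" using P1 by simp
  from partition_on_inj_image[OF P2 inj_ush]
  have "partition_on (ush L (p+1) ` ({1..M+L} - J)) ((`) (ush L (p+1)) ` (\<lambda>B. B - J) ` P - {{}})" .
  moreover have "ush L (p+1) ` ({1..M+L} - J) = {1..M}"
  proof -
    have "ush L (p+1) ` ({1..M+L} - J) = ush L (p+1) ` (sh L (p+1) ` {1..M})"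
      using sh_image_interval[of "p+1" M L] p1 p2 by simp
    also have "\<dots> = {1..M}" by (simp add: image_image)
    finally show ?thesis .
  qed
  moreover have "(`) (ush L (p+1)) ` (\<lambda>B. B - J) ` P = rexb L p P"
    unfolding rexb_def rexB_def image_image by simp
  moreover have "{} \<notin> rexb L p P" using P2 unfolding partition_on_def rexb_def rexB_def by auto
  ultimately show ?thesis by simp
qed

lemma card_rexB: "B \<in> P \<Longrightarrow> card (rexB L p B) = card B - (if B = B0 then L else 0)"
proof -
  assume B: "B \<in> P"
  have fin: "finite B" using partition_block_sub[OF P B] finite_subset by blast
  have "card (rexB L p B) = card (B - J)" unfolding rexB_def using card_image[OF injB[OF B]] .
  also have "\<dots> = card B - (if B = B0 then L else 0)"
  proof (cases "B = B0")
    case True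
    then show ?thesis using card_Diff_subset[OF _ B0(3)] fin by simp
  next
    case False
    then show ?thesis using avoidJ[OF B] by (simp add: Diff_triv)
  qed
  finally show ?thesis .
qed

lemma nc: "noncrossing P \<Longrightarrow> noncrossing (rexb L p P)"
proof (rule noncrossingI)
  fix x y z w B1 B2
  assume nc: "noncrossing P"
  assume B: "B1 \<in> rexb L p P" "B2 \<in> rexb L p P" "B1 \<noteq> B2" "x < y" "y < z" "z < w"
    "x \<in> B1" "z \<in> B1" "y \<in> B2" "w \<in> B2"
  obtain C1 where C1: "C1 \<in> P" "B1 = rexB L p C1" using B unfolding rexb_def by auto
  obtain C2 where C2: "C2 \<in> P" "B2 = rexB L p C2" using B unfolding rexb_def by auto
  have "sh L (p+1) ` B1 \<subseteq> C1" "sh L (p+1) ` B2 \<subseteq> C2" using shush C1 C2 by auto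
  then have "sh L (p+1) x \<in> C1" "sh L (p+1) z \<in> C1" "sh L (p+1) y \<in> C2" "sh L (p+1) w \<in> C2" using B by auto
  moreover have "C1 \<noteq> C2" using B C1 C2 by auto
  ultimately show False
    using noncrossingD[OF nc C1(1) C2(1), of "sh L (p+1) x" "sh L (p+1) y" "sh L (p+1) z" "sh L (p+1) w"] B
    by auto
qed

end




section \<open>Arithmetic of phi\<close>

lemma seg_rep: "1 \<le> (x::nat) \<Longrightarrow> 0 < m \<Longrightarrow> \<exists>q t. x = q*m + t \<and> 1 \<le> t \<and> t \<le> m"
proof -
  assume "1 \<le> x" "0 < m"
  have "x - 1 = (x-1) div m * m + (x-1) mod m" by simp
  moreover have "(x-1) mod m < m" using \<open>0 < m\<close> by simp
  ultimately show ?thesis using \<open>1 \<le> x\<close> by (intro exI[of _ "(x-1) div m"] exI[of _ "(x-1) mod m + 1"]) auto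
qed

lemma mult_step: "(q::nat) < j \<Longrightarrow> q*c + c \<le> j*c"
proof -
  assume "q < j"
  then have "Suc q * c \<le> j * c" by (intro mult_le_mono1) simp
  then show ?thesis by simp
qed

lemma seg_less:
  assumes "1 \<le> t" "t \<le> m" "1 \<le> r" "r \<le> (m::nat)"
  shows "q*m + t < j*m + r \<longleftrightarrow> q < j \<or> (q = j \<and> t < r)"
proof -
  have "q < j \<Longrightarrow> q*m + t < j*m + r" using mult_step[of q j m] assms by linarith
  moreover have "j < q \<Longrightarrow> \<not> q*m + t < j*m + r" using mult_step[of j q m] assms by linarith
  ultimately show ?thesis by (cases q j rule: linorder_cases) auto
qed

lemma seg_eq:
  assumes "1 \<le> t" "t \<le> m" "1 \<le> r" "r \<le> (m::nat)"
  shows "q*m + t = j*m + r \<longleftrightarrow> q = j \<and> t = r"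
  using seg_less[OF assms, of q j] seg_less[OF assms(3,4,1,2), of j q] by (cases q j rule: linorder_cases) auto

lemma phi_seg:
  assumes "1 \<le> t" "t \<le> k+1" "q*(k+1) + t < n*(k+1)"
  shows "phi k n (q*(k+1) + t) = q*k + t"
proof -
  have "(q*(k+1) + t - 1) div (k+1) = q"
    by (rule div_nat_eqI) (use assms in \<open>auto simp: algebra_simps\<close>)
  then show ?thesis using assms unfolding phi_def by simp
qed

lemma phi_top: "phi k n (n*(k+1)) = 1"
  unfolding phi_def by simp

lemma phi_range:
  assumes "x \<in> {1..n*(k+1)}" "0 < k"
  shows "phi k n x \<in> {1..k*n}"
proof (cases "x = n*(k+1)")
  case True
  have "1 \<le> n" using assms True by (cases n) auto
  then have "1 \<le> k*n" using assms by simp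
  moreover have "phi k n x = 1" using True phi_top[of k n] by simp
  ultimately show ?thesis by simp
next
  case False
  obtain q t where qt: "x = q*(k+1) + t" "1 \<le> t" "t \<le> k+1" using seg_rep[of x "k+1"] assms by auto
  have xl: "x < n*(k+1)" using False assms by auto
  have ph: "phi k n x = q*k + t" using phi_seg[OF qt(2,3)] qt(1) xl by simp
  have "q < n"
  proof (rule ccontr)
    assume "\<not> q < n"
    then have "n*(k+1) \<le> q*(k+1)" by (intro mult_le_mono1) simp
    then show False using xl qt by linarith
  qed
  show ?thesis
  proof (cases "q + 1 = n")
    case True
    then have "t \<le> k" using xl qt by (auto simp: algebra_simps)
    then show ?thesis using ph qt True by (auto simp: algebra_simps)
  next
    case False
    then have "q < n - 1" using \<open>q < n\<close> by simp
    then have "q*k + k \<le> (n-1)*k" by (rule mult_step)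
    moreover have "(n-1)*k + k = k*n" using \<open>q < n\<close> by (cases n) (auto simp: algebra_simps)
    ultimately show ?thesis using ph qt assms by auto
  qed
qed

lemma phi_glue:
  assumes "u < w" "u \<in> {1..n*(k+1)}" "w \<in> {1..n*(k+1)}" "phi k n u = phi k n w" "0 < k"
  shows "(w = u+1 \<and> u mod (k+1) = 0) \<or> (u = 1 \<and> w = n*(k+1))"
proof -
  have ul: "u < n*(k+1)" using assms by auto
  obtain q t where qt: "u = q*(k+1) + t" "1 \<le> t" "t \<le> k+1" using seg_rep[of u "k+1"] assms by auto
  have pu: "phi k n u = q*k + t" using phi_seg[OF qt(2,3)] qt(1) ul by simp
  show ?thesis
  proof (cases "w = n*(k+1)")
    case True
    then have "q*k + t = 1" using pu assms phi_top by simp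
    then have qk: "q*k = 0" and "t = 1" using qt(2) by linarith+
    from qk \<open>0 < k\<close> have "q = 0" by simp
    then show ?thesis using True qt \<open>t = 1\<close> by simp
  next
    case False
    then have wl: "w < n*(k+1)" using assms by auto
    obtain q' t' where qt': "w = q'*(k+1) + t'" "1 \<le> t'" "t' \<le> k+1" using seg_rep[of w "k+1"] assms by auto
    have pw: "phi k n w = q'*k + t'" using phi_seg[OF qt'(2,3)] qt'(1) wl by simp
    have e: "q*k + t = q'*k + t'" using pu pw assms by simp
    have "q < q' \<or> (q = q' \<and> t < t')" using seg_less[OF qt(2,3) qt'(2,3), of q q'] assms qt qt' by simp
    then show ?thesis
    proof
      assume "q = q' \<and> t < t'" then show ?thesis using e by simp
    next
      assume qq: "q < q'"
      then have "q*k + k \<le> q'*k" by (rule mult_step)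
      then have tm: "t = k+1" using e qt qt' by linarith
      have "q' = q + 1"
      proof (rule ccontr)
        assume "q' \<noteq> q+1"
        then have "q + 1 < q'" using qq by simp
        then have "(q+1)*k + k \<le> q'*k" by (rule mult_step)
        then show False using e tm qt' assms(5) by (simp add: algebra_simps)
      qed
      then have "t' = 1" using e tm by (simp add: algebra_simps)
      then have "w = u + 1" using qt qt' tm \<open>q' = q+1\<close> by (simp add: algebra_simps)
      moreover have "u = (q+1)*(k+1)" using qt tm by (simp add: algebra_simps)
      then have "u mod (k+1) = 0" by (metis mod_mult_self2_is_0)
      ultimately show ?thesis by simp
    qed
  qed
qed




lemma seg_rep':
  assumes "x \<in> {1..n*(k+1)}" "x \<noteq> n*(k+1)"
  obtains q t where "x = q*(k+1) + t" "1 \<le> t" "t \<le> k+1" "x < n*(k+1)" "phi k n x = q*k + t"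
proof -
  obtain q t where qt: "x = q*(k+1) + t" "1 \<le> t" "t \<le> k+1" using seg_rep[of x "k+1"] assms by auto
  have xl: "x < n*(k+1)" using assms by auto
  show ?thesis using that[OF qt xl] phi_seg[OF qt(2,3)] qt(1) xl by simp
qed

lemma phi_comm_B:
  assumes k: "0<k" and j: "j < n" and r: "2 \<le> r" "r \<le> k+1" and x: "x \<in> {1..n*(k+1)}"
  shows "phi k (Suc n) (sh (k+1) (j*(k+1)+r) x) = sh k (j*k+r) (phi k n x)"
proof (cases "x = n*(k+1)")
  case True
  have "j*(k+1) + (k+1) \<le> n*(k+1)" using mult_step[OF j, of "k+1"] by (simp add: algebra_simps)
  then have "\<not> x < j*(k+1)+r" using True r by simp
  then have "sh (k+1) (j*(k+1)+r) x = Suc n * (k+1)" using True by (simp add: sh_def)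
  moreover have "phi k n x = 1" using True phi_top[of k n] by simp
  moreover have "phi k (Suc n) (Suc n * (k+1)) = 1" by (rule phi_top)
  moreover have "sh k (j*k+r) 1 = 1" using r by (simp add: sh_def)
  ultimately show ?thesis by simp
next
  case False
  from seg_rep'[OF x False] obtain q t where qt: "x = q*(k+1) + t" "1 \<le> t" "t \<le> k+1"
    "x < n*(k+1)" "phi k n x = q*k + t" .
  have cmp: "x < j*(k+1)+r \<longleftrightarrow> q < j \<or> (q = j \<and> t < r)"
    using seg_less[OF qt(2,3), of r q j] r qt(1) by simp
  show ?thesis
  proof (cases "x < j*(k+1)+r")
    case True
    have "x < Suc n * (k+1)" using qt by simp
    then have p1: "phi k (Suc n) x = q*k + t" using phi_seg[OF qt(2,3), of q "Suc n"] qt(1) by simp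
    have "q*k + t < j*k + r"
    proof (cases "q < j")
      case True then show ?thesis using mult_step[OF True, of k] qt r by linarith
    next
      case False then show ?thesis using cmp \<open>x < j*(k+1)+r\<close> by auto
    qed
    then show ?thesis using True p1 qt by (simp add: sh_def)
  next
    case False
    have e: "sh (k+1) (j*(k+1)+r) x = (q+1)*(k+1) + t" using False qt by (simp add: sh_def)
    have "(q+1)*(k+1) + t < Suc n * (k+1)" using qt by simp
    then have p1: "phi k (Suc n) ((q+1)*(k+1) + t) = (q+1)*k + t" using phi_seg[OF qt(2,3)] by blast
    have "\<not> q*k + t < j*k + r"
    proof (cases "j < q")
      case True then show ?thesis using mult_step[OF True, of k] qt r by linarith
    next
      case False then show ?thesis using cmp \<open>\<not> x < j*(k+1)+r\<close> by auto
    qed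
    then show ?thesis using e p1 qt by (simp add: sh_def algebra_simps)
  qed
qed

lemma phi_comm_A:
  assumes k: "0<k" and j: "j < n" and x: "x \<in> {1..n*(k+1)}" "x \<noteq> j*(k+1)+1"
  shows "phi k (Suc n) (sh (k+1) (j*(k+1)+1) x) = sh k (j*k+2) (phi k n x)"
proof (cases "x = n*(k+1)")
  case True
  have "j*(k+1) + (k+1) \<le> n*(k+1)" using mult_step[OF j, of "k+1"] by (simp add: algebra_simps)
  then have "\<not> x < j*(k+1)+1" using True k by simp
  then have "sh (k+1) (j*(k+1)+1) x = Suc n * (k+1)" using True by (simp add: sh_def)
  moreover have "phi k n x = 1" using True phi_top[of k n] by simp
  moreover have "phi k (Suc n) (Suc n * (k+1)) = 1" by (rule phi_top)
  moreover have "sh k (j*k+2) 1 = 1" by (simp add: sh_def)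
  ultimately show ?thesis by simp
next
  case False
  from seg_rep'[OF x(1) False] obtain q t where qt: "x = q*(k+1) + t" "1 \<le> t" "t \<le> k+1"
    "x < n*(k+1)" "phi k n x = q*k + t" .
  have cmp: "x < j*(k+1)+1 \<longleftrightarrow> q < j"
    using seg_less[OF qt(2,3), of 1 q j] qt(1,2) by simp
  have cmpe: "x = j*(k+1)+1 \<longleftrightarrow> q = j \<and> t = 1"
    using seg_eq[OF qt(2,3), of 1 q j] qt(1) by simp
  show ?thesis
  proof (cases "x < j*(k+1)+1")
    case True
    have "x < Suc n * (k+1)" using qt by simp
    then have p1: "phi k (Suc n) x = q*k + t" using phi_seg[OF qt(2,3), of q "Suc n"] qt(1) by simp
    have "q*k + t < j*k + 2"
      using mult_step[of q j k] cmp True qt by linarith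
    then show ?thesis using True p1 qt by (simp add: sh_def)
  next
    case False
    have e: "sh (k+1) (j*(k+1)+1) x = (q+1)*(k+1) + t" using False qt by (simp add: sh_def)
    have "(q+1)*(k+1) + t < Suc n * (k+1)" using qt by simp
    then have p1: "phi k (Suc n) ((q+1)*(k+1) + t) = (q+1)*k + t" using phi_seg[OF qt(2,3)] by blast
    have "\<not> q*k + t < j*k + 2"
    proof (cases "j < q")
      case True then show ?thesis using mult_step[OF True, of k] qt k by linarith
    next
      case False
      then have "q = j" using cmp \<open>\<not> x < j*(k+1)+1\<close> by auto
      then have "t \<noteq> 1" using cmpe x(2) by auto
      then show ?thesis using \<open>q = j\<close> qt by simp
    qed
    then show ?thesis using e p1 qt by (simp add: sh_def algebra_simps)
  qed
qed

lemma phi_A_special: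
  assumes k: "0<k" and j: "j < n"
  shows "phi k n (j*(k+1)+1) = j*k+1"
    and "phi k (Suc n) (sh (k+1) (j*(k+1)+1) (j*(k+1)+1)) = j*k+1+k"
proof -
  have "j*(k+1) + (k+1) \<le> n*(k+1)" using mult_step[OF j, of "k+1"] by (simp add: algebra_simps)
  then have "j*(k+1)+1 < n*(k+1)" using k by simp
  then show "phi k n (j*(k+1)+1) = j*k+1" using phi_seg[of 1 k j n] by simp
  have "(j+1)*(k+1)+1 < Suc n*(k+1)" using \<open>j*(k+1) + (k+1) \<le> n*(k+1)\<close> k by simp
  then have "phi k (Suc n) ((j+1)*(k+1)+1) = (j+1)*k+1" using phi_seg[of 1 k "j+1" "Suc n"] by simp
  then show "phi k (Suc n) (sh (k+1) (j*(k+1)+1) (j*(k+1)+1)) = j*k+1+k"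
    by (simp add: sh_def algebra_simps)
qed


lemma phi_img_B:
  assumes k: "0<k" and j: "j < n" and r: "2 \<le> r" "r \<le> k+1"
  shows "phi k (Suc n) ` {j*(k+1)+r ..< j*(k+1)+r+(k+1)} = {j*k+r ..< j*k+r+k}"
proof
  have jn: "j*(k+1) + (k+1) \<le> n*(k+1)" using mult_step[OF j, of "k+1"] by (simp add: algebra_simps)
  show "phi k (Suc n) ` {j*(k+1)+r ..< j*(k+1)+r+(k+1)} \<subseteq> {j*k+r ..< j*k+r+k}"
  proof
    fix y assume "y \<in> phi k (Suc n) ` {j*(k+1)+r ..< j*(k+1)+r+(k+1)}"
    then obtain x where x: "x \<in> {j*(k+1)+r ..< j*(k+1)+r+(k+1)}" "y = phi k (Suc n) x" by blast
    show "y \<in> {j*k+r ..< j*k+r+k}"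
    proof (cases "x < (j+1)*(k+1) + 1")
      case True
      define t where "t = x - j*(k+1)"
      have t: "x = j*(k+1) + t" "1 \<le> t" "t \<le> k+1" using x True r unfolding t_def by (auto simp: algebra_simps)
      have "x < Suc n * (k+1)" using True jn by simp
      then have "y = j*k + t" using phi_seg[OF t(2,3), of j "Suc n"] t(1) x by simp
      then show ?thesis using t x r by auto
    next
      case False
      define t where "t = x - (j+1)*(k+1)"
      have t: "x = (j+1)*(k+1) + t" "1 \<le> t" "t \<le> k+1" "t < r" using x False r unfolding t_def by (auto simp: algebra_simps)
      have "x < Suc n * (k+1)" using x jn r by (simp add: algebra_simps)
      then have "y = (j+1)*k + t" using phi_seg[OF t(2,3), of "j+1" "Suc n"] t(1) x by simp
      then show ?thesis using t x r by auto
    qed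
  qed
  show "{j*k+r ..< j*k+r+k} \<subseteq> phi k (Suc n) ` {j*(k+1)+r ..< j*(k+1)+r+(k+1)}"
  proof
    fix y assume y: "y \<in> {j*k+r ..< j*k+r+k}"
    show "y \<in> phi k (Suc n) ` {j*(k+1)+r ..< j*(k+1)+r+(k+1)}"
    proof (cases "y \<le> j*k + k + 1")
      case True
      define t where "t = y - j*k"
      have t: "1 \<le> t" "t \<le> k+1" "r \<le> t" "y = j*k+t" using y True r unfolding t_def by auto
      have "j*(k+1) + t < Suc n * (k+1)" using jn t by simp
      then have "phi k (Suc n) (j*(k+1) + t) = y" using phi_seg[OF t(1,2), of j "Suc n"] t by simp
      moreover have "j*(k+1) + t \<in> {j*(k+1)+r ..< j*(k+1)+r+(k+1)}" using t r by auto
      ultimately show ?thesis by (metis image_eqI)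
    next
      case False
      define t where "t = y - j*k - k"
      have t: "1 \<le> t" "t \<le> k+1" "t < r" "y = (j+1)*k+t" using y False r unfolding t_def by auto
      have "(j+1)*(k+1) + t < Suc n * (k+1)" using jn t r by (simp add: algebra_simps)
      then have "phi k (Suc n) ((j+1)*(k+1) + t) = y" using phi_seg[OF t(1,2), of "j+1" "Suc n"] t by simp
      moreover have "(j+1)*(k+1) + t \<in> {j*(k+1)+r ..< j*(k+1)+r+(k+1)}" using t r by (auto simp: algebra_simps)
      ultimately show ?thesis by (metis image_eqI)
    qed
  qed
qed

lemma phi_img_A:
  assumes k: "0<k" and j: "j < n"
  shows "phi k (Suc n) ` {j*(k+1)+1 ..< j*(k+1)+1+(k+1)} = {j*k+1 ..< j*k+1+1+k}"
proof
  have jn: "j*(k+1) + (k+1) \<le> n*(k+1)" using mult_step[OF j, of "k+1"] by (simp add: algebra_simps)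
  show "phi k (Suc n) ` {j*(k+1)+1 ..< j*(k+1)+1+(k+1)} \<subseteq> {j*k+1 ..< j*k+1+1+k}"
  proof
    fix y assume "y \<in> phi k (Suc n) ` {j*(k+1)+1 ..< j*(k+1)+1+(k+1)}"
    then obtain x where x: "x \<in> {j*(k+1)+1 ..< j*(k+1)+1+(k+1)}" "y = phi k (Suc n) x" by blast
    define t where "t = x - j*(k+1)"
    have t: "x = j*(k+1) + t" "1 \<le> t" "t \<le> k+1" using x unfolding t_def by (auto simp: algebra_simps)
    have "x < Suc n * (k+1)" using x jn by simp
    then have "y = j*k + t" using phi_seg[OF t(2,3), of j "Suc n"] t(1) x by simp
    then show "y \<in> {j*k+1 ..< j*k+1+1+k}" using t by auto
  qed
  show "{j*k+1 ..< j*k+1+1+k} \<subseteq> phi k (Suc n) ` {j*(k+1)+1 ..< j*(k+1)+1+(k+1)}"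
  proof
    fix y assume y: "y \<in> {j*k+1 ..< j*k+1+1+k}"
    define t where "t = y - j*k"
    have t: "1 \<le> t" "t \<le> k+1" "y = j*k+t" using y unfolding t_def by auto
    have "j*(k+1) + t < Suc n * (k+1)" using jn t by simp
    then have "phi k (Suc n) (j*(k+1) + t) = y" using phi_seg[OF t(1,2), of j "Suc n"] t by simp
    moreover have "j*(k+1) + t \<in> {j*(k+1)+1 ..< j*(k+1)+1+(k+1)}" using t by auto
    ultimately show "y \<in> phi k (Suc n) ` {j*(k+1)+1 ..< j*(k+1)+1+(k+1)}" by (metis image_eqI)
  qed
qed

lemma phi_preimage_B:
  assumes k: "0<k" and j: "Suc j < n" and r: "2 \<le> r" "r \<le> k+1"
    and x: "x \<in> {1..n*(k+1)}" and px: "phi k n x \<in> {j*k+r ..< j*k+r+k}"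
  shows "x \<in> {j*(k+1)+r ..< j*(k+1)+r+(k+1)}"
proof (cases "x = n*(k+1)")
  case True then show ?thesis using px r phi_top[of k n] by simp
next
  case False
  from seg_rep'[OF x False] obtain q t where qt: "x = q*(k+1) + t" "1 \<le> t" "t \<le> k+1"
    "x < n*(k+1)" "phi k n x = q*k + t" .
  have q1: "\<not> q < j" using mult_step[of q j k] px qt r by auto
  have q2: "\<not> j + 1 < q" using mult_step[of "j+1" q k] px qt r by (auto simp: algebra_simps)
  consider "q = j" | "q = j+1" using q1 q2 by linarith
  then show ?thesis
  proof cases
    case 1 then show ?thesis using qt px by auto
  next
    case 2 then show ?thesis using qt px by (auto simp: algebra_simps)
  qed
qed




definition finest :: "nat \<Rightarrow> nat \<Rightarrow> nat set set \<Rightarrow> nat set set \<Rightarrow> bool" where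
  "finest k n \<pi> \<sigma> \<longleftrightarrow> compatible k n \<pi> \<sigma> \<and> (\<forall>\<tau>. compatible k n \<pi> \<tau> \<longrightarrow> refines \<sigma> \<tau>)"

lemma refines_antisym:
  assumes P: "partition_on A P" and Q: "partition_on A Q" and PQ: "refines P Q" and QP: "refines Q P"
  shows "P = Q"
proof -
  have *: "B \<in> Q" if P: "partition_on A P" and Q: "partition_on A Q" and PQ: "refines P Q" and QP: "refines Q P"
      and B: "B \<in> P" for P Q :: "'a set set" and B
  proof -
    obtain C where C: "C \<in> Q" "B \<subseteq> C" using PQ B unfolding refines_def by blast
    obtain B' where B': "B' \<in> P" "C \<subseteq> B'" using QP C unfolding refines_def by blast
    obtain x where "x \<in> B" using partition_nonempty[OF P B] by blast
    then have "B = B'" using partition_same_block[OF P B B'(1)] C B' by blast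
    then have "B = C" using C(2) B'(2) by (metis order_antisym)
    then show ?thesis using C(1) by simp
  qed
  show ?thesis using *[OF P Q PQ QP] *[OF Q P QP PQ] by blast
qed

lemma fmap_eq: "finest k n \<pi> \<sigma> \<Longrightarrow> fmap k n \<pi> = \<sigma>"
  unfolding fmap_def
proof (rule the_equality)
  assume f: "finest k n \<pi> \<sigma>"
  then show "compatible k n \<pi> \<sigma> \<and> (\<forall>\<tau>. compatible k n \<pi> \<tau> \<longrightarrow> refines \<sigma> \<tau>)"
    unfolding finest_def .
  fix \<sigma>2 assume s2: "compatible k n \<pi> \<sigma>2 \<and> (\<forall>\<tau>. compatible k n \<pi> \<tau> \<longrightarrow> refines \<sigma>2 \<tau>)"
  show "\<sigma>2 = \<sigma>"
    by (rule refines_antisym[of "{1..k*n}"]) (use s2 f in \<open>auto simp: finest_def compatible_def\<close>)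
qed

lemma finest_unique: "finest k n \<pi> \<sigma>1 \<Longrightarrow> finest k n \<pi> \<sigma>2 \<Longrightarrow> \<sigma>1 = \<sigma>2"
  using fmap_eq by metis

section \<open>Relabelling a partition\<close>

definition relab :: "(nat \<Rightarrow> nat) \<Rightarrow> nat set \<Rightarrow> nat set set \<Rightarrow> nat set set" where
  "relab h J \<tau> = (`) h ` ((\<inter>) (-J) ` \<tau> - {{}}) - {{}}"

lemma relab_partition:
  assumes "partition_on A \<tau>" "inj_on h (A - J)" "h ` (A - J) = A'"
  shows "partition_on A' (relab h J \<tau>)"
proof -
  have P1: "partition_on ((-J) \<inter> A) ((\<inter>) (-J) ` \<tau> - {{}})"
    by (rule partition_on_restrict[OF assms(1)])
  have "(-J) \<inter> A = A - J" by auto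
  then have P2: "partition_on (A - J) ((\<inter>) (-J) ` \<tau> - {{}})" using P1 by simp
  from partition_on_inj_image[OF P2 assms(2)] show ?thesis unfolding relab_def using assms(3) by simp
qed

lemma relab_mem: "D \<in> relab h J \<tau> \<Longrightarrow> \<exists>C\<in>\<tau>. D = h ` (C - J)"
  unfolding relab_def by (auto simp: Diff_eq Int_commute)

lemma relab_memI: "C \<in> \<tau> \<Longrightarrow> C - J \<noteq> {} \<Longrightarrow> h ` (C - J) \<in> relab h J \<tau>"
  unfolding relab_def by (auto simp: Diff_eq Int_commute)

lemma ush_inj_img:
  assumes "1 \<le> b" "b \<le> M+1"
  shows "inj_on (ush L b) ({1..M+L} - {b..<b+L})" "ush L b ` ({1..M+L} - {b..<b+L}) = {1..M}"
proof -
  show "inj_on (ush L b) ({1..M+L} - {b..<b+L})"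
    by (rule inj_on_inverseI[where g = "sh L b"]) (auto simp: sh_ush)
  have "ush L b ` ({1..M+L} - {b..<b+L}) = ush L b ` (sh L b ` {1..M})"
    using sh_image_interval[OF assms] by simp
  also have "\<dots> = {1..M}" by (simp add: image_image)
  finally show "ush L b ` ({1..M+L} - {b..<b+L}) = {1..M}" .
qed

lemma NC_lower_1:
  assumes "\<pi> \<in> NC_lower (k+1) 1"
  shows "\<pi> = {{1..k+1}}"
proof -
  have P: "partition_on {1..k+1} \<pi>" and c: "\<forall>B\<in>\<pi>. card B = k+1" using assms unfolding NC_lower_def by auto
  have "B = {1..k+1}" if "B \<in> \<pi>" for B
    using partition_block_sub[OF P that] c that by (intro card_subset_eq) auto
  moreover have "\<pi> \<noteq> {}" using P unfolding partition_on_def by auto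
  ultimately show ?thesis by blast
qed

lemma NC_upper_1:
  assumes "\<sigma> \<in> NC_upper k 1" "0 < k"
  shows "\<sigma> = {{1..k}}"
proof -
  have P: "partition_on {1..k} \<sigma>" and c: "\<forall>B\<in>\<sigma>. k dvd card B" using assms unfolding NC_upper_def by auto
  have "B = {1..k}" if "B \<in> \<sigma>" for B
  proof -
    have s: "B \<subseteq> {1..k}" using partition_block_sub[OF P that] .
    have "B \<noteq> {}" using partition_nonempty[OF P that] .
    then have "card B > 0" using s finite_subset by (metis card_gt_0_iff finite_atLeastAtMost)
    moreover have "card B \<le> k" using card_mono[OF _ s] by simp
    ultimately have "card B = k" using c that by (meson dvd_imp_le le_antisym)
    then show ?thesis using s by (intro card_subset_eq) auto
  qed
  moreover have "\<sigma> \<noteq> {}" using P assms unfolding partition_on_def by auto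
  ultimately show ?thesis by blast
qed

lemma base_finest:
  assumes "0 < k"
  shows "finest k 1 {{1..k+1}} {{1..k}}"
proof -
  have img: "phi k 1 ` {1..k+1} = {1..k}"
  proof
    show "phi k 1 ` {1..k+1} \<subseteq> {1..k}" using phi_range[of _ 1 k] assms by auto
    show "{1..k} \<subseteq> phi k 1 ` {1..k+1}"
    proof
      fix y assume y: "y \<in> {1..k}"
      then have "phi k 1 y = y" unfolding phi_def by (auto simp: div_less)
      then show "y \<in> phi k 1 ` {1..k+1}" using y by force
    qed
  qed
  show ?thesis unfolding finest_def compatible_def refines_def
    using img assms by (auto simp: partition_on_space)
qed




lemma step_B:
  assumes k: "0 < k" and j: "j < n" and r: "2 \<le> r" "r \<le> k+1"
    and P: "partition_on {1..(k+1)*n} \<pi>" and F: "finest k n \<pi> \<sigma>"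
  shows "finest k (Suc n) (insb (k+1) (j*(k+1)+r) \<pi>) (insb k (j*k+r) \<sigma>)"
proof -
  define a where "a = j*(k+1)+r"
  define b where "b = j*k+r"
  have jn: "j*k + k \<le> n*k" using mult_step[OF j] .
  have S: "partition_on {1..k*n} \<sigma>" using F unfolding finest_def compatible_def by blast
  have SC: "\<forall>V\<in>\<pi>. \<exists>B\<in>\<sigma>. phi k n ` V \<subseteq> B" using F unfolding finest_def compatible_def by blast
  have Sfin: "\<And>\<tau>. compatible k n \<pi> \<tau> \<Longrightarrow> refines \<sigma> \<tau>" using F unfolding finest_def by blast
  have b1: "1 \<le> b" "b \<le> k*n + 1" using r jn unfolding b_def by (auto simp: algebra_simps)
  have part: "partition_on {1..k*Suc n} (insb k b \<sigma>)"
    using insb_partition[OF S b1 k] by (simp add: algebra_simps)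
  have comm: "phi k (Suc n) ` sh (k+1) a ` V = sh k b ` phi k n ` V" if "V \<in> \<pi>" for V
  proof -
    have "V \<subseteq> {1..n*(k+1)}" using partition_block_sub[OF P that] by (simp add: algebra_simps)
    then show ?thesis using phi_comm_B[OF k j r] unfolding a_def b_def image_image
      by (intro image_cong) auto
  qed
  have imgI: "phi k (Suc n) ` {a..<a+(k+1)} = {b..<b+k}" unfolding a_def b_def using phi_img_B[OF k j r] .
  have compat: "compatible k (Suc n) (insb (k+1) a \<pi>) (insb k b \<sigma>)"
    unfolding compatible_def
  proof (intro conjI ballI)
    show "partition_on {1..k*Suc n} (insb k b \<sigma>)" by (rule part)
    fix V assume "V \<in> insb (k+1) a \<pi>"
    then consider "V = {a..<a+(k+1)}" | V' where "V' \<in> \<pi>" "V = sh (k+1) a ` V'" unfolding insb_def by blast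
    then show "\<exists>B\<in>insb k b \<sigma>. phi k (Suc n) ` V \<subseteq> B"
    proof cases
      case 1 then show ?thesis using imgI unfolding insb_def by auto
    next
      case 2
      obtain C where "C \<in> \<sigma>" "phi k n ` V' \<subseteq> C" using SC 2 by blast
      then have "phi k (Suc n) ` V \<subseteq> sh k b ` C" "sh k b ` C \<in> insb k b \<sigma>"
        using comm[OF 2(1)] 2 unfolding insb_def by auto
      then show ?thesis by blast
    qed
  qed
  have fine: "refines (insb k b \<sigma>) \<tau>" if T: "compatible k (Suc n) (insb (k+1) a \<pi>) \<tau>" for \<tau>
  proof -
    have TP: "partition_on {1..k*n + k} \<tau>" using T unfolding compatible_def by (simp add: algebra_simps)
    have TC: "\<forall>V\<in>insb (k+1) a \<pi>. \<exists>B\<in>\<tau>. phi k (Suc n) ` V \<subseteq> B" using T unfolding compatible_def by blast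
    define J where "J = {b..<b+k}"
    define \<tau>' where "\<tau>' = relab (ush k b) J \<tau>"
    have T'P: "partition_on {1..k*n} \<tau>'"
      unfolding \<tau>'_def J_def by (rule relab_partition[OF TP ush_inj_img[OF b1]])
    have T'C: "compatible k n \<pi> \<tau>'"
      unfolding compatible_def
    proof (intro conjI ballI)
      show "partition_on {1..k*n} \<tau>'" by (rule T'P)
      fix V' assume V': "V' \<in> \<pi>"
      then have "sh (k+1) a ` V' \<in> insb (k+1) a \<pi>" unfolding insb_def by blast
      then obtain C where C: "C \<in> \<tau>" "phi k (Suc n) ` sh (k+1) a ` V' \<subseteq> C" using TC by blast
      then have sub: "sh k b ` phi k n ` V' \<subseteq> C" using comm[OF V'] by simp
      have "sh k b ` phi k n ` V' \<inter> J = {}" using sh_notin[of k b] unfolding J_def by blast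
      then have sub2: "sh k b ` phi k n ` V' \<subseteq> C - J" using sub by blast
      have "phi k n ` V' = ush k b ` sh k b ` phi k n ` V'" by (simp add: image_image)
      also have "\<dots> \<subseteq> ush k b ` (C - J)" using sub2 by (rule image_mono)
      finally have "phi k n ` V' \<subseteq> ush k b ` (C - J)" .
      moreover have "C - J \<noteq> {}" using sub2 partition_nonempty[OF P V'] by blast
      ultimately show "\<exists>B\<in>\<tau>'. phi k n ` V' \<subseteq> B" unfolding \<tau>'_def using relab_memI[OF C(1)] by blast
    qed
    have R: "refines \<sigma> \<tau>'" using Sfin[OF T'C] .
    show "refines (insb k b \<sigma>) \<tau>"
      unfolding refines_def
    proof
      fix B assume "B \<in> insb k b \<sigma>"
      then consider "B = {b..<b+k}" | C' where "C' \<in> \<sigma>" "B = sh k b ` C'" unfolding insb_def by blast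
      then show "\<exists>C\<in>\<tau>. B \<subseteq> C"
      proof cases
        case 1
        have "{a..<a+(k+1)} \<in> insb (k+1) a \<pi>" unfolding insb_def by simp
        then show ?thesis using TC imgI 1 by metis
      next
        case 2
        obtain D where D: "D \<in> \<tau>'" "C' \<subseteq> D" using R 2(1) unfolding refines_def by blast
        obtain C where C: "C \<in> \<tau>" "D = ush k b ` (C - J)" using relab_mem D(1) unfolding \<tau>'_def by blast
        have "B \<subseteq> sh k b ` ush k b ` (C - J)" using 2 C D by (simp add: image_mono)
        also have "\<dots> = C - J"
        proof -
          have "\<And>y. y \<in> C - J \<Longrightarrow> sh k b (ush k b y) = y" using sh_ush[of _ b k] unfolding J_def by blast
          then show ?thesis by (force simp: image_image)
        qed
        finally show ?thesis using C by blast
      qed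
    qed
  qed
  show ?thesis unfolding finest_def using compat fine unfolding a_def b_def by blast
qed


lemma step_A:
  assumes k: "0 < k" and j: "j < n"
    and P: "partition_on {1..(k+1)*n} \<pi>" and F: "finest k n \<pi> \<sigma>"
  shows "finest k (Suc n) (insb (k+1) (j*(k+1)+1) \<pi>) (extb k (j*k+1) \<sigma>)"
proof -
  define a where "a = j*(k+1)+1"
  define p where "p = j*k+1"
  have jn: "j*k + k \<le> n*k" using mult_step[OF j] .
  have S: "partition_on {1..k*n} \<sigma>" using F unfolding finest_def compatible_def by blast
  have SC: "\<forall>V\<in>\<pi>. \<exists>B\<in>\<sigma>. phi k n ` V \<subseteq> B" using F unfolding finest_def compatible_def by blast
  have Sfin: "\<And>\<tau>. compatible k n \<pi> \<tau> \<Longrightarrow> refines \<sigma> \<tau>" using F unfolding finest_def by blast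
  have p1: "1 \<le> p" "p \<le> k*n" using jn k unfolding p_def by (auto simp: algebra_simps)
  have part: "partition_on {1..k*Suc n} (extb k p \<sigma>)"
    using extb_partition[OF S p1] by (simp add: algebra_simps)
  have spec: "phi k n a = p" "phi k (Suc n) (sh (k+1) a a) = p + k"
    using phi_A_special[OF k j] unfolding a_def p_def by auto
  have comm: "phi k (Suc n) (sh (k+1) a x) = sh k (p+1) (phi k n x)"
    if "x \<in> {1..n*(k+1)}" "x \<noteq> a" for x
    using phi_comm_A[OF k j that[unfolded a_def]] unfolding a_def p_def by simp
  have Vsub: "V \<subseteq> {1..n*(k+1)}" if "V \<in> \<pi>" for V
    using partition_block_sub[OF P that] by (simp add: algebra_simps)
  have imgI: "phi k (Suc n) ` {a..<a+(k+1)} = {p..<p+1+k}" unfolding a_def p_def using phi_img_A[OF k j] .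
  have compat: "compatible k (Suc n) (insb (k+1) a \<pi>) (extb k p \<sigma>)"
    unfolding compatible_def
  proof (intro conjI ballI)
    show "partition_on {1..k*Suc n} (extb k p \<sigma>)" by (rule part)
    fix V assume "V \<in> insb (k+1) a \<pi>"
    then consider "V = {a..<a+(k+1)}" | V' where "V' \<in> \<pi>" "V = sh (k+1) a ` V'" unfolding insb_def by blast
    then show "\<exists>B\<in>extb k p \<sigma>. phi k (Suc n) ` V \<subseteq> B"
    proof cases
      case 1
      obtain C0 where C0: "C0 \<in> \<sigma>" "p \<in> C0" using partition_ex_block[OF S] p1 by force
      have "{p..<p+1+k} \<subseteq> extB k p C0"
      proof
        fix y assume y: "y \<in> {p..<p+1+k}"
        show "y \<in> extB k p C0"
        proof (cases "y = p")
          case True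
          then have "y = sh k (p+1) p" by (simp add: sh_def)
          then show ?thesis using C0 by (simp add: extB_def)
        next
          case False then show ?thesis using y C0 by (simp add: extB_def)
        qed
      qed
      moreover have "extB k p C0 \<in> extb k p \<sigma>" using C0 unfolding extb_def by blast
      ultimately show ?thesis using 1 imgI by auto
    next
      case 2
      obtain C where C: "C \<in> \<sigma>" "phi k n ` V' \<subseteq> C" using SC 2 by blast
      have "phi k (Suc n) ` V \<subseteq> extB k p C"
      proof
        fix y assume "y \<in> phi k (Suc n) ` V"
        then obtain x where x: "x \<in> V'" "y = phi k (Suc n) (sh (k+1) a x)" using 2 by blast
        show "y \<in> extB k p C"
        proof (cases "x = a")
          case True
          then have "p \<in> C" using spec C x by blast
          moreover have "y = p + k" using True x spec by simp
          ultimately show ?thesis using k by (simp add: extB_def)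
        next
          case False
          then have "y = sh k (p+1) (phi k n x)" using comm Vsub[OF 2(1)] x by auto
          moreover have "phi k n x \<in> C" using C x by blast
          ultimately have "y \<in> sh k (p+1) ` C" by blast
          then show ?thesis by (simp add: extB_def)
        qed
      qed
      then show ?thesis using C unfolding extb_def by blast
    qed
  qed
  have fine: "refines (extb k p \<sigma>) \<tau>" if T: "compatible k (Suc n) (insb (k+1) a \<pi>) \<tau>" for \<tau>
  proof -
    have TP: "partition_on {1..k*n + k} \<tau>" using T unfolding compatible_def by (simp add: algebra_simps)
    have TC: "\<forall>V\<in>insb (k+1) a \<pi>. \<exists>B\<in>\<tau>. phi k (Suc n) ` V \<subseteq> B" using T unfolding compatible_def by blast
    have "{a..<a+(k+1)} \<in> insb (k+1) a \<pi>" unfolding insb_def by simp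
    then obtain C0 where C0: "C0 \<in> \<tau>" "phi k (Suc n) ` {a..<a+(k+1)} \<subseteq> C0" using TC by blast
    then have C0: "C0 \<in> \<tau>" "{p..<p+1+k} \<subseteq> C0" using imgI by auto
    define J where "J = {p+1..<p+1+k}"
    have b1: "1 \<le> p+1" "p+1 \<le> k*n + 1" using p1 by auto
    define \<tau>' where "\<tau>' = relab (ush k (p+1)) J \<tau>"
    have T'P: "partition_on {1..k*n} \<tau>'"
      unfolding \<tau>'_def J_def by (rule relab_partition[OF TP ush_inj_img[OF b1]])
    have T'C: "compatible k n \<pi> \<tau>'"
      unfolding compatible_def
    proof (intro conjI ballI)
      show "partition_on {1..k*n} \<tau>'" by (rule T'P)
      fix V' assume V': "V' \<in> \<pi>"
      then have "sh (k+1) a ` V' \<in> insb (k+1) a \<pi>" unfolding insb_def by blast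
      then obtain C where C: "C \<in> \<tau>" "phi k (Suc n) ` sh (k+1) a ` V' \<subseteq> C" using TC by blast
      have sub: "phi k n ` V' \<subseteq> ush k (p+1) ` (C - J)"
      proof
        fix y assume "y \<in> phi k n ` V'"
        then obtain x where x: "x \<in> V'" "y = phi k n x" by blast
        show "y \<in> ush k (p+1) ` (C - J)"
        proof (cases "x = a")
          case True
          have "phi k (Suc n) (sh (k+1) a x) \<in> phi k (Suc n) ` sh (k+1) a ` V'" using x by blast
          then have "phi k (Suc n) (sh (k+1) a x) \<in> C" by (rule subsetD[OF C(2)])
          then have "p + k \<in> C" using True spec by simp
          moreover have "p + k \<in> C0" using C0 by auto
          ultimately have "C = C0" by (rule partition_same_block[OF TP C(1) C0(1)])
          then have "p \<in> C - J" using C0 unfolding J_def by auto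
          moreover have "y = ush k (p+1) p" using True x spec by (simp add: ush_def)
          ultimately show ?thesis by blast
        next
          case False
          then have e: "phi k (Suc n) (sh (k+1) a x) = sh k (p+1) y" using comm Vsub[OF V'] x by auto
          have "phi k (Suc n) (sh (k+1) a x) \<in> phi k (Suc n) ` sh (k+1) a ` V'" using x by blast
          then have "phi k (Suc n) (sh (k+1) a x) \<in> C" by (rule subsetD[OF C(2)])
          then have "sh k (p+1) y \<in> C" using e by simp
          moreover have "sh k (p+1) y \<notin> J" using sh_notin[of k "p+1" y] unfolding J_def by simp
          ultimately have "sh k (p+1) y \<in> C - J" by blast
          moreover have "y = ush k (p+1) (sh k (p+1) y)" by simp
          ultimately show ?thesis by blast
        qed
      qed
      moreover have "C - J \<noteq> {}" using sub partition_nonempty[OF P V'] by blast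
      ultimately show "\<exists>B\<in>\<tau>'. phi k n ` V' \<subseteq> B" unfolding \<tau>'_def using relab_memI[OF C(1)] by blast
    qed
    have R: "refines \<sigma> \<tau>'" using Sfin[OF T'C] .
    show "refines (extb k p \<sigma>) \<tau>"
      unfolding refines_def
    proof
      fix B assume "B \<in> extb k p \<sigma>"
      then obtain C' where C': "C' \<in> \<sigma>" "B = extB k p C'" unfolding extb_def by blast
      obtain D where D: "D \<in> \<tau>'" "C' \<subseteq> D" using R C'(1) unfolding refines_def by blast
      obtain C where C: "C \<in> \<tau>" "D = ush k (p+1) ` (C - J)" using relab_mem D(1) unfolding \<tau>'_def by blast
      have shC: "sh k (p+1) ` C' \<subseteq> C - J"
      proof -
        have "sh k (p+1) ` C' \<subseteq> sh k (p+1) ` ush k (p+1) ` (C - J)" using C D by (simp add: image_mono)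
        also have "\<dots> = C - J"
        proof -
          have "\<And>y. y \<in> C - J \<Longrightarrow> sh k (p+1) (ush k (p+1) y) = y" using sh_ush[of _ "p+1" k] unfolding J_def by blast
          then show ?thesis by (force simp: image_image)
        qed
        finally show ?thesis .
      qed
      have "J \<subseteq> C" if "p \<in> C'"
      proof -
        have "p \<in> ush k (p+1) ` (C - J)" using that C D by blast
        then obtain y where y: "y \<in> C - J" "p = ush k (p+1) y" by blast
        then have "y = p" unfolding J_def by (auto simp: ush_def split: if_splits)
        then have "p \<in> C" using y by simp
        moreover have "p \<in> C0" using C0 by auto
        ultimately have "C = C0" by (rule partition_same_block[OF TP C(1) C0(1)])
        then show ?thesis using C0 unfolding J_def by auto
      qed
      then have "B \<subseteq> C" using C'(2) shC unfolding extB_def J_def by (auto split: if_splits)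
      then show "\<exists>C\<in>\<tau>. B \<subseteq> C" using C by blast
    qed
  qed
  show ?thesis unfolding finest_def using compat fine unfolding a_def p_def by blast
qed




lemma interval_block:
  assumes P: "partition_on {1..M} P" and nc: "noncrossing P" and B0: "B0 \<in> P" "e \<in> B0" "e = 1 \<or> e = M"
    and ex: "\<exists>C\<in>P. C \<noteq> B0"
  shows "\<exists>C\<in>P. C \<noteq> B0 \<and> C = {Min C..Max C}"
proof -
  define Q where "Q = (\<lambda>C. C \<in> P \<and> C \<noteq> B0)"
  obtain C0 where "Q C0" using ex unfolding Q_def by blast
  from ex_has_least_nat[of Q C0 "\<lambda>C. Max C - Min C", OF this]
  obtain C where C: "C \<in> P" "C \<noteq> B0" and mn: "\<And>D. D \<in> P \<Longrightarrow> D \<noteq> B0 \<Longrightarrow> Max C - Min C \<le> Max D - Min D"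
    unfolding Q_def by blast
  have fin: "\<And>D. D \<in> P \<Longrightarrow> finite D" using partition_block_sub[OF P] finite_subset by blast
  have ne: "\<And>D. D \<in> P \<Longrightarrow> D \<noteq> {}" using partition_nonempty[OF P] by blast
  have CI: "C \<subseteq> {Min C..Max C}" using fin[OF C(1)] by auto
  have "{Min C..Max C} \<subseteq> C"
  proof
    fix z assume z: "z \<in> {Min C..Max C}"
    show "z \<in> C"
    proof (rule ccontr)
      assume zC: "z \<notin> C"
      have mC: "Min C \<in> C" "Max C \<in> C" using fin[OF C(1)] ne[OF C(1)] by auto
      then have zs: "Min C < z" "z < Max C" using z zC by (auto simp: le_less)
      have "z \<in> {1..M}" using z partition_block_sub[OF P C(1)] mC by auto
      then obtain D where D: "D \<in> P" "z \<in> D" using partition_ex_block[OF P] by blast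
      have DC: "D \<noteq> C" using D zC by auto
      have DCd: "D \<inter> C = {}" using P D(1) C(1) DC unfolding partition_on_def disjoint_def by blast
      have Din: "D \<subseteq> {Min C<..<Max C}"
      proof
        fix d assume d: "d \<in> D"
        have "d \<noteq> Min C" "d \<noteq> Max C" using d DCd mC by auto
        moreover have "\<not> d < Min C"
        proof
          assume "d < Min C"
          then show False using noncrossingD[OF nc D(1) C(1) DC, of d "Min C" z "Max C"] d D zs mC by auto
        qed
        moreover have "\<not> Max C < d"
        proof
          assume "Max C < d"
          then show False using noncrossingD[OF nc C(1) D(1) DC[symmetric], of "Min C" z "Max C" d] d D zs mC by auto
        qed
        ultimately show "d \<in> {Min C<..<Max C}" by auto
      qed
      have "D \<noteq> B0"
      proof
        assume "D = B0"
        then have "e \<in> {Min C<..<Max C}" using Din B0 by auto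
        moreover have "Min C \<ge> 1" "Max C \<le> M" using partition_block_sub[OF P C(1)] mC by auto
        ultimately show False using B0(3) by auto
      qed
      then have le: "Max C - Min C \<le> Max D - Min D" using mn D(1) by blast
      have "Min D \<in> D" "Max D \<in> D" using fin[OF D(1)] ne[OF D(1)] by auto
      then have "Min C < Min D" "Max D < Max C" "Min D \<le> Max D" using Din fin[OF D(1)] ne[OF D(1)] by auto
      then show False using le by linarith
    qed
  qed
  then show ?thesis using CI C by blast
qed

lemma interval_card:
  assumes "C = {Min C..Max C}" "C \<noteq> {}" "finite C"
  shows "C = {Min C..<Min C + card C}"
proof -
  have "card C = card {Min C..Max C}" using assms(1) by simp
  then have c: "card C = Suc (Max C) - Min C" by simp
  moreover have "Min C \<le> Max C" using assms by simp
  ultimately have "Min C + card C = Suc (Max C)" by simp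
  then have "{Min C..<Min C + card C} = {Min C..Max C}" by auto
  then show ?thesis using assms(1) by simp
qed


lemma other_block:
  assumes P: "partition_on A P" and B0: "B0 \<in> P" and ne: "B0 \<noteq> A"
  shows "\<exists>C\<in>P. C \<noteq> B0"
proof (rule ccontr)
  assume "\<not> ?thesis"
  then have "\<forall>C\<in>P. C = B0" by blast
  then have "\<Union>P \<subseteq> B0" by blast
  moreover have "\<Union>P = A" using P unfolding partition_on_def by blast
  moreover have "B0 \<subseteq> A" using partition_block_sub[OF P B0] .
  ultimately show False using ne by blast
qed

lemma decomp_lower:
  assumes k: "0 < k" and n: "0 < n" and pi: "\<pi> \<in> NC_lower (k+1) (Suc n)"
  shows "\<exists>j r \<pi>'. \<pi>' \<in> NC_lower (k+1) n \<and> j < n \<and> 1 \<le> r \<and> r \<le> k+1 \<and> \<pi> = insb (k+1) (j*(k+1)+r) \<pi>'"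
proof -
  define N where "N = (k+1)*Suc n"
  have P: "partition_on {1..N} \<pi>" and nc: "noncrossing \<pi>" and cd: "\<forall>B\<in>\<pi>. card B = k+1"
    using pi unfolding NC_lower_def N_def by auto
  have N1: "N \<in> {1..N}" unfolding N_def by simp
  obtain B0 where B0: "B0 \<in> \<pi>" "N \<in> B0" using partition_ex_block[OF P N1] by blast
  have "B0 \<noteq> {1..N}"
  proof
    assume "B0 = {1..N}"
    then have "card B0 = N" by simp
    moreover have "N \<noteq> k+1" unfolding N_def using n by simp
    ultimately show False using cd B0 by simp
  qed
  then obtain C where C: "C \<in> \<pi>" "C \<noteq> B0" "C = {Min C..Max C}"
    using interval_block[OF P nc B0 _ other_block[OF P B0(1)]] by blast
  have fin: "finite C" using partition_block_sub[OF P C(1)] finite_subset by blast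
  have neC: "C \<noteq> {}" using partition_nonempty[OF P C(1)] .
  define a where "a = Min C"
  have CI: "C = {a..<a+(k+1)}" using interval_card[OF C(3) neC fin] cd C(1) unfolding a_def by simp
  have a1: "1 \<le> a" using partition_block_sub[OF P C(1)] Min_in[OF fin neC] unfolding a_def by auto
  have "N \<notin> C" using partition_same_block[OF P C(1) B0(1)] B0 C(2) by blast
  moreover have "a + k \<in> C" using CI by simp
  moreover have "a + k \<le> N" using partition_block_sub[OF P C(1)] \<open>a + k \<in> C\<close> by auto
  ultimately have aN: "a + k < N" by (metis le_neq_implies_less)
  then have aM: "a \<le> (k+1)*n + 1" unfolding N_def by (simp add: algebra_simps)
  obtain j r where jr: "a = j*(k+1) + r" "1 \<le> r" "r \<le> k+1" using seg_rep[of a "k+1"] a1 by auto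
  have "j < n"
  proof (rule ccontr)
    assume "\<not> j < n"
    then have "n*(k+1) \<le> j*(k+1)" by (intro mult_le_mono1) simp
    then show False using aN jr unfolding N_def by (simp add: algebra_simps)
  qed
  interpret R: rembloc "(k+1)*n" "k+1" a \<pi>
    by unfold_locales (use P CI C a1 aM in \<open>auto simp: N_def algebra_simps\<close>)
  have "remb (k+1) a \<pi> \<in> NC_lower (k+1) n"
    unfolding NC_lower_def using R.part R.nc[OF nc] R.cards cd by auto
  then show ?thesis using R.eq jr \<open>j < n\<close> by blast
qed


lemma rex_upper:
  assumes k: "0 < k" and S: "\<sigma> \<in> NC_upper k (Suc n)" and B0: "B0 \<in> \<sigma>" "{p..<p+1+k} \<subseteq> B0"
    and p: "1 \<le> p" "p \<le> k*n"
  shows "rexb k p \<sigma> \<in> NC_upper k n \<and> \<sigma> = extb k p (rexb k p \<sigma>)"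
proof -
  have P: "partition_on {1..k*n + k} \<sigma>" and nc: "noncrossing \<sigma>" and cd: "\<forall>B\<in>\<sigma>. k dvd card B"
    using S unfolding NC_upper_def by (auto simp: algebra_simps)
  interpret R: rexloc "k*n" k p \<sigma> B0
    by unfold_locales (use P B0 p in auto)
  have "\<forall>B\<in>rexb k p \<sigma>. k dvd card B"
  proof
    fix C assume "C \<in> rexb k p \<sigma>"
    then obtain B where B: "B \<in> \<sigma>" "C = rexB k p B" unfolding rexb_def by blast
    then have "card C = card B - (if B = B0 then k else 0)" using R.card_rexB by simp
    then show "k dvd card C" using cd B(1) by (simp add: dvd_diff_nat)
  qed
  then show ?thesis using R.part R.nc[OF nc] R.eq unfolding NC_upper_def by auto
qed

lemma rem_upper:
  assumes k: "0 < k" and S: "\<sigma> \<in> NC_upper k (Suc n)" and I: "{b..<b+k} \<in> \<sigma>" and b: "1 \<le> b" "b \<le> k*n+1"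
  shows "remb k b \<sigma> \<in> NC_upper k n \<and> \<sigma> = insb k b (remb k b \<sigma>)"
proof -
  have P: "partition_on {1..k*n + k} \<sigma>" and nc: "noncrossing \<sigma>" and cd: "\<forall>B\<in>\<sigma>. k dvd card B"
    using S unfolding NC_upper_def by (auto simp: algebra_simps)
  interpret R: rembloc "k*n" k b \<sigma>
    by unfold_locales (use P I b k in auto)
  show ?thesis using R.part R.nc[OF nc] R.eq R.cards cd unfolding NC_upper_def by fastforce
qed

lemma decomp_upper:
  assumes k: "0 < k" and n: "0 < n" and S: "\<sigma> \<in> NC_upper k (Suc n)"
  shows "\<exists>j \<sigma>'. \<sigma>' \<in> NC_upper k n \<and> j < n \<and>
     ((\<exists>r. 2 \<le> r \<and> r \<le> k+1 \<and> {j*k+r..<j*k+r+k} \<in> \<sigma> \<and> \<sigma> = insb k (j*k+r) \<sigma>') \<or>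
      ((\<exists>B\<in>\<sigma>. {j*k+1..<j*k+1+1+k} \<subseteq> B) \<and> \<sigma> = extb k (j*k+1) \<sigma>'))"
proof -
  define N where "N = k*Suc n"
  have P: "partition_on {1..N} \<sigma>" and nc: "noncrossing \<sigma>" and cd: "\<forall>B\<in>\<sigma>. k dvd card B"
    using S unfolding NC_upper_def N_def by auto
  have N1: "1 \<in> {1..N}" unfolding N_def using k by simp
  obtain B0 where B0: "B0 \<in> \<sigma>" "1 \<in> B0" using partition_ex_block[OF P N1] by blast
  show ?thesis
  proof (cases "B0 = {1..N}")
    case True
    have kn: "k \<le> k*n" using n by simp
    have "{0*k+1..<0*k+1+1+k} \<subseteq> B0"
    proof
      fix x assume "x \<in> {0*k+1..<0*k+1+1+k}"
      then have "1 \<le> x" "x \<le> k + 1" by auto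
      then have "1 \<le> x" "x \<le> k*Suc n" using kn k by (simp_all add: algebra_simps, linarith)
      then show "x \<in> B0" using True unfolding N_def by simp
    qed
    moreover have "1 \<le> 0*k+1" "0*k+1 \<le> k*n" using n k by auto
    ultimately show ?thesis using rex_upper[OF k S B0(1)] n B0(1) by blast
  next
    case False
    then obtain C where C: "C \<in> \<sigma>" "C \<noteq> B0" "C = {Min C..Max C}"
      using interval_block[OF P nc B0 _ other_block[OF P B0(1)]] by blast
    have fin: "finite C" using partition_block_sub[OF P C(1)] finite_subset by blast
    have neC: "C \<noteq> {}" using partition_nonempty[OF P C(1)] .
    define b where "b = Min C"
    define c where "c = card C"
    have CI: "C = {b..<b+c}" using interval_card[OF C(3) neC fin] unfolding b_def c_def by simp
    have c0: "0 < c" using fin neC unfolding c_def by (simp add: card_gt_0_iff)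
    have "1 \<notin> C" using partition_same_block[OF P C(1) B0(1)] B0 C(2) by blast
    moreover have "b \<in> C" "b \<ge> 1" using partition_block_sub[OF P C(1)] Min_in[OF fin neC] unfolding b_def by auto
    ultimately have b2: "2 \<le> b" by (cases "b = 1") auto
    have "b + c - 1 \<in> C" using CI c0 by auto
    then have bcN: "b + c - 1 \<le> N" using partition_block_sub[OF P C(1)] by auto
    obtain q where q: "c = k*q" using cd C(1) unfolding c_def by blast
    show ?thesis
    proof (cases "q = 1")
      case True
      then have ck: "c = k" using q by simp
      define j where "j = (b-2) div k"
      define r where "r = (b-2) mod k + 2"
      have br: "b = j*k + r" unfolding j_def r_def using b2 div_mult_mod_eq[of "b-2" k] by linarith
      have "(b-2) mod k < k" using k by simp
      then have r: "2 \<le> r" "r \<le> k+1" unfolding r_def by auto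
      have N': "N = k*n + k" unfolding N_def by simp
      have "k*j < k*n" using bcN ck br r N' mult.commute[of j k] by linarith
      then have jn: "j < n" by simp
      have "b \<le> k*n+1" using bcN ck unfolding N_def by (simp add: algebra_simps)
      then have "remb k b \<sigma> \<in> NC_upper k n \<and> \<sigma> = insb k b (remb k b \<sigma>)"
        using rem_upper[OF k S _ _] C(1) CI ck b2 by simp
      then show ?thesis using jn r br C(1) CI ck by blast
    next
      case False
      then have "2 \<le> q" using q c0 by (cases q) auto
      then have c2: "2*k \<le> c" using q by simp
      define j where "j = (b+k-2) div k"
      define s where "s = (b+k-2) mod k"
      have js: "j*k + s = b + k - 2" unfolding j_def s_def by simp
      have s: "s < k" unfolding s_def using k by simp
      have sub: "{j*k+1..<j*k+1+1+k} \<subseteq> C" using CI js s c2 b2 by auto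
      have "j*k + 1 + k \<le> N" using js s c2 b2 bcN by linarith
      moreover have N': "N = k*n + k" unfolding N_def by simp
      ultimately have "k*j < k*n" using mult.commute[of j k] by linarith
      then have jn: "j < n" by simp
      have p: "1 \<le> j*k+1" "j*k+1 \<le> k*n" using \<open>k*j < k*n\<close> mult.commute[of j k] by linarith+
      have "{j*k+1..<j*k+1+1+k} \<subseteq> C" using sub by simp
      then show ?thesis using rex_upper[OF k S C(1) _ p] jn C(1) by blast
    qed
  qed
qed




lemma forced_B:
  assumes k: "0<k" and j: "Suc j < n" and r: "2 \<le> r" "r \<le> k+1"
    and pi: "\<pi> \<in> NC_lower (k+1) n" and C: "compatible k n \<pi> \<sigma>" and I: "{j*k+r..<j*k+r+k} \<in> \<sigma>"
  shows "{j*(k+1)+r..<j*(k+1)+r+(k+1)} \<in> \<pi>"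
proof -
  define a where "a = j*(k+1)+r"
  have P: "partition_on {1..n*(k+1)} \<pi>" and cd: "\<forall>B\<in>\<pi>. card B = k+1"
    using pi unfolding NC_lower_def by (auto simp: algebra_simps)
  have S: "partition_on {1..k*n} \<sigma>" and SC: "\<forall>V\<in>\<pi>. \<exists>B\<in>\<sigma>. phi k n ` V \<subseteq> B"
    using C unfolding compatible_def by auto
  have jn: "(j+1)*(k+1) + (k+1) \<le> n*(k+1)" using mult_step[of "j+1" n "k+1"] j by simp
  have al: "a < n*(k+1)" using jn r unfolding a_def by (simp add: algebra_simps)
  have pa: "phi k n a = j*k + r" unfolding a_def using phi_seg[OF _ r(2), of j n] r al unfolding a_def by simp
  have a1: "a \<in> {1..n*(k+1)}" using al r unfolding a_def by auto
  obtain V where V: "V \<in> \<pi>" "a \<in> V" using partition_ex_block[OF P a1] by blast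
  obtain B where B: "B \<in> \<sigma>" "phi k n ` V \<subseteq> B" using SC V by blast
  have "phi k n a \<in> B" using B V by blast
  moreover have "phi k n a \<in> {j*k+r..<j*k+r+k}" using pa k by simp
  ultimately have "B = {j*k+r..<j*k+r+k}" using partition_same_block[OF S B(1) I] by blast
  then have "V \<subseteq> {a..<a+(k+1)}"
    using phi_preimage_B[OF k j r] partition_block_sub[OF P V(1)] B unfolding a_def by blast
  moreover have "card V = card {a..<a+(k+1)}" using cd V by simp
  ultimately have "V = {a..<a+(k+1)}" by (intro card_subset_eq) auto
  then show ?thesis using V unfolding a_def by simp
qed

lemma closed_card:
  assumes P: "partition_on A \<pi>" and cd: "\<forall>B\<in>\<pi>. card B = m" and fin: "finite A"
    and R: "R \<subseteq> A" and cl: "\<forall>W\<in>\<pi>. W \<subseteq> R \<or> W \<inter> R = {}"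
  shows "m dvd card R"
proof -
  define F where "F = {W\<in>\<pi>. W \<subseteq> R}"
  have "R = \<Union>F"
  proof
    show "R \<subseteq> \<Union>F"
    proof
      fix x assume "x \<in> R"
      then obtain W where "W \<in> \<pi>" "x \<in> W" using partition_ex_block[OF P] R by blast
      then show "x \<in> \<Union>F" using cl \<open>x \<in> R\<close> unfolding F_def by blast
    qed
    show "\<Union>F \<subseteq> R" unfolding F_def by blast
  qed
  moreover have "pairwise disjnt F" using partition_onD2[OF P] unfolding F_def
    by (rule pairwise_subset) blast
  moreover have "\<And>W. W \<in> F \<Longrightarrow> finite W" unfolding F_def using partition_block_sub[OF P] fin finite_subset by blast
  ultimately have "card R = sum card F" using card_Union_disjoint by metis
  also have "\<dots> = sum (\<lambda>_. m) F" using cd unfolding F_def by (intro sum.cong) auto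
  also have "\<dots> = m * card F" by simp
  finally show ?thesis by simp
qed


lemma mod_shift_dvd:
  assumes "(m::nat) dvd c"
  shows "(x + c) mod m = x mod m"
  using assms by (metis mod_add_right_eq mod_0 dvd_eq_mod_eq_0 add.right_neutral)

lemma region:
  assumes k: "0<k" and pi: "\<pi> \<in> NC_lower (k+1) n"
    and V: "V \<in> \<pi>" "x \<in> V" "x+1 \<notin> V" "x+1 \<le> n*(k+1)" "x mod (k+1) \<noteq> 0"
  shows "\<exists>R. R \<subseteq> {1..n*(k+1)} \<and> x+1 \<in> R \<and> x \<notin> R \<and> (\<forall>W\<in>\<pi>. W \<subseteq> R \<or> W \<inter> R = {})
     \<and> (\<forall>u\<in>R. \<forall>w\<in>{1..n*(k+1)} - R. phi k n u \<noteq> phi k n w)"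
proof -
  define N where "N = n*(k+1)"
  have P: "partition_on {1..N} \<pi>" and nc: "noncrossing \<pi>" and cd: "\<forall>B\<in>\<pi>. card B = k+1"
    using pi unfolding NC_lower_def N_def by (auto simp: algebra_simps)
  have VN: "V \<subseteq> {1..N}" using partition_block_sub[OF P V(1)] .
  have finV: "finite V" using VN finite_subset by blast
  have x1: "1 \<le> x" using VN V by auto
  have xN: "x + 1 \<le> N" using V unfolding N_def by simp
  have Vd: "\<And>W. W \<in> \<pi> \<Longrightarrow> W \<noteq> V \<Longrightarrow> W \<inter> V = {}"
    using P V(1) unfolding partition_on_def disjoint_def by blast
  have ccard: "(k+1) dvd card R" if "R \<subseteq> {1..N}" "\<forall>W\<in>\<pi>. W \<subseteq> R \<or> W \<inter> R = {}" for R
    by (rule closed_card[OF P cd _ that]) simp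
  have glue: "(w = u+1 \<and> u mod (k+1) = 0) \<or> (u = 1 \<and> w = N)"
    if "u < w" "u \<in> {1..N}" "w \<in> {1..N}" "phi k n u = phi k n w" for u w
    using phi_glue[OF that(1) _ _ that(4) k] that(2,3) unfolding N_def by blast
  define H where "H = {v\<in>V. x < v}"
  show ?thesis
  proof (cases "H = {}")
    case False
    have finH: "finite H" using finV unfolding H_def by simp
    define y where "y = Min H"
    have yH: "y \<in> H" using Min_in[OF finH False] unfolding y_def .
    then have yV: "y \<in> V" "x < y" unfolding H_def by auto
    have ymin: "\<And>v. v \<in> V \<Longrightarrow> x < v \<Longrightarrow> y \<le> v" using finH unfolding y_def H_def by auto
    have yx1: "x + 1 < y" using yV V(3) by (cases "y = x+1") auto
    define R where "R = {x+1..<y}"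
    have RN: "R \<subseteq> {1..N}" using VN yV unfolding R_def by auto
    have VR: "V \<inter> R = {}" using ymin unfolding R_def by fastforce
    have cl: "\<forall>W\<in>\<pi>. W \<subseteq> R \<or> W \<inter> R = {}"
    proof (intro ballI)
      fix W assume W: "W \<in> \<pi>"
      show "W \<subseteq> R \<or> W \<inter> R = {}"
      proof (rule ccontr)
        assume "\<not> (W \<subseteq> R \<or> W \<inter> R = {})"
        then obtain w w' where w: "w \<in> W" "w \<in> R" "w' \<in> W" "w' \<notin> R" by blast
        have WV: "W \<noteq> V" using VR w by blast
        have "w' \<noteq> x" "w' \<noteq> y" using Vd[OF W WV] w yV V by auto
        then consider "w' < x" | "y < w'" using w unfolding R_def by fastforce
        then show False
        proof cases
          case 1
          then show False using noncrossingD[OF nc W V(1) WV, of w' x w y] w V yV unfolding R_def by auto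
        next
          case 2
          then show False using noncrossingD[OF nc V(1) W WV[symmetric], of x w y w'] w V yV unfolding R_def by auto
        qed
      qed
    qed
    have "(k+1) dvd card R" using ccard[OF RN cl] .
    then have "(k+1) dvd (y - (x+1))" unfolding R_def by simp
    then have ymod: "(y - 1) mod (k+1) = x mod (k+1)"
      using mod_shift_dvd[of "k+1" "y - (x+1)" x] yx1 by (simp add: add.commute)
    have sep: "\<forall>u\<in>R. \<forall>w\<in>{1..N} - R. phi k n u \<noteq> phi k n w"
    proof (intro ballI notI)
      fix u w assume u: "u \<in> R" and w: "w \<in> {1..N} - R" and e: "phi k n u = phi k n w"
      have uN: "u \<in> {1..N}" using u RN by blast
      have "u \<noteq> w" using u w by blast
      then consider "u < w" | "w < u" by linarith
      then show False
      proof cases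
        case 1
        from glue[OF 1 uN _ e] w consider "w = u+1" "u mod (k+1) = 0" | "u = 1" by auto
        then show False
        proof cases
          case 1
          then have "u = y - 1" using u w unfolding R_def by auto
          then show False using 1 ymod V(5) by simp
        next
          case 2 then show False using u x1 unfolding R_def by auto
        qed
      next
        case 2
        from glue[OF 2 _ uN e[symmetric]] w consider "u = w+1" "w mod (k+1) = 0" | "u = N" by auto
        then show False
        proof cases
          case 1
          then have "w = x" using u w unfolding R_def by auto
          then show False using 1 V(5) by simp
        next
          case 2 then show False using u yV VN unfolding R_def by auto
        qed
      qed
    qed
    show ?thesis
      apply (rule exI[of _ R])
      using RN cl sep yx1 unfolding N_def R_def by auto
  next
    case True
    have neV: "V \<noteq> {}" using V by blast
    define v1 where "v1 = Min V"
    have v1V: "v1 \<in> V" using Min_in[OF finV neV] unfolding v1_def .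
    have Vin: "\<And>v. v \<in> V \<Longrightarrow> v1 \<le> v \<and> v \<le> x" using True finV unfolding H_def v1_def by fastforce
    have v1x: "v1 \<le> x" using Vin V by blast
    have v11: "1 \<le> v1" using v1V VN by auto
    define R where "R = {x+1..N} \<union> {1..<v1}"
    have RN: "R \<subseteq> {1..N}" using v1x xN unfolding R_def by auto
    have VR: "V \<inter> R = {}" using Vin unfolding R_def by fastforce
    have cl: "\<forall>W\<in>\<pi>. W \<subseteq> R \<or> W \<inter> R = {}"
    proof (intro ballI)
      fix W assume W: "W \<in> \<pi>"
      show "W \<subseteq> R \<or> W \<inter> R = {}"
      proof (rule ccontr)
        assume "\<not> (W \<subseteq> R \<or> W \<inter> R = {})"
        then obtain w w' where w: "w \<in> W" "w \<in> R" "w' \<in> W" "w' \<notin> R" by blast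
        have WV: "W \<noteq> V" using VR w by blast
        have "w' \<noteq> x" "w' \<noteq> v1" using Vd[OF W WV] w v1V V by auto
        moreover have "w' \<in> {1..N}" using partition_block_sub[OF P W] w by blast
        ultimately have w's: "v1 < w'" "w' < x" using w unfolding R_def by auto
        consider "x < w" | "w < v1" using w unfolding R_def by auto
        then show False
        proof cases
          case 1
          then show False using noncrossingD[OF nc V(1) W WV[symmetric], of v1 w' x w] w V v1V w's by auto
        next
          case 2
          then show False using noncrossingD[OF nc W V(1) WV, of w v1 w' x] w V v1V w's by auto
        qed
      qed
    qed
    have "(k+1) dvd card R" using ccard[OF RN cl] .
    moreover have "card R = (N - x) + (v1 - 1)"
    proof -
      have "{x+1..N} \<inter> {1..<v1} = {}" using v1x by auto
      then show ?thesis unfolding R_def by (simp add: card_Un_disjoint)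
    qed
    ultimately have dv: "(k+1) dvd (N - x) + (v1 - 1)" by simp
    have v1mod: "(v1 - 1) mod (k+1) \<noteq> 0"
    proof
      assume "(v1 - 1) mod (k+1) = 0"
      then have "(k+1) dvd (v1 - 1)" by auto
      then have "(k+1) dvd (N - x)" using dv by (simp add: dvd_add_left_iff)
      moreover have "(k+1) dvd N" unfolding N_def by (rule dvd_triv_right)
      ultimately have "(k+1) dvd x"
        using dvd_diff_nat[of "k+1" N "N - x"] xN by simp
      then show False using V(5) by simp
    qed
    have sep: "\<forall>u\<in>R. \<forall>w\<in>{1..N} - R. phi k n u \<noteq> phi k n w"
    proof (intro ballI notI)
      fix u w assume u: "u \<in> R" and w: "w \<in> {1..N} - R" and e: "phi k n u = phi k n w"
      have uN: "u \<in> {1..N}" using u RN by blast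
      have wr: "v1 \<le> w" "w \<le> x" using w unfolding R_def by auto
      have "u \<noteq> w" using u w by blast
      then consider "u < w" | "w < u" by linarith
      then show False
      proof cases
        case 1
        from glue[OF 1 uN _ e] w consider "w = u+1" "u mod (k+1) = 0" | "w = N" by auto
        then show False
        proof cases
          case 1
          then have "u = v1 - 1" using u wr unfolding R_def by auto
          then show False using 1 v1mod by simp
        next
          case 2 then show False using wr xN by auto
        qed
      next
        case 2
        from glue[OF 2 _ uN e[symmetric]] w consider "u = w+1" "w mod (k+1) = 0" | "w = 1" by auto
        then show False
        proof cases
          case 1
          then have "w = x" using u wr 2 unfolding R_def by auto
          then show False using 1 V(5) by simp
        next
          case 2 then have "v1 = 1" using wr v11 by auto
          then show False using v1mod by simp
        qed
      qed
    qed
    show ?thesis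
      apply (rule exI[of _ R])
      using RN cl sep xN v1x unfolding N_def R_def by auto
  qed
qed


definition splitp :: "nat set \<Rightarrow> nat set set \<Rightarrow> nat set set" where
  "splitp Q \<sigma> = ((\<lambda>C. C \<inter> Q) ` \<sigma> \<union> (\<lambda>C. C - Q) ` \<sigma>) - {{}}"

lemma split_partition:
  assumes S: "partition_on A \<sigma>"
  shows "partition_on A (splitp Q \<sigma>)"
proof (rule partition_onI)
  show "\<Union>(splitp Q \<sigma>) = A"
  proof
    show "\<Union>(splitp Q \<sigma>) \<subseteq> A" unfolding splitp_def using partition_block_sub[OF S] by blast
    show "A \<subseteq> \<Union>(splitp Q \<sigma>)"
    proof
      fix x assume "x \<in> A"
      then obtain C where C: "C \<in> \<sigma>" "x \<in> C" using partition_ex_block[OF S] by blast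
      show "x \<in> \<Union>(splitp Q \<sigma>)"
      proof (cases "x \<in> Q")
        case True
        then have "x \<in> C \<inter> Q" "C \<inter> Q \<in> splitp Q \<sigma>" using C unfolding splitp_def by auto
        then show ?thesis by blast
      next
        case False
        then have "x \<in> C - Q" "C - Q \<in> splitp Q \<sigma>" using C unfolding splitp_def by auto
        then show ?thesis by blast
      qed
    qed
  qed
  show "{} \<notin> splitp Q \<sigma>" unfolding splitp_def by blast
  fix X Y assume X: "X \<in> splitp Q \<sigma>" and Y: "Y \<in> splitp Q \<sigma>" and XY: "X \<noteq> Y"
  obtain C1 where C1: "C1 \<in> \<sigma>" "X = C1 \<inter> Q \<or> X = C1 - Q" using X unfolding splitp_def by blast
  obtain C2 where C2: "C2 \<in> \<sigma>" "Y = C2 \<inter> Q \<or> Y = C2 - Q" using Y unfolding splitp_def by blast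
  show "disjnt X Y"
  proof (cases "C1 = C2")
    case True
    then show ?thesis using C1 C2 XY unfolding disjnt_def by blast
  next
    case False
    then have "C1 \<inter> C2 = {}" using S C1(1) C2(1) unfolding partition_on_def disjoint_def by blast
    then show ?thesis using C1 C2 unfolding disjnt_def by blast
  qed
qed

lemma forced_A:
  assumes k: "0<k" and j: "Suc j < n" and pi: "\<pi> \<in> NC_lower (k+1) n" and F: "finest k n \<pi> \<sigma>"
    and B: "B \<in> \<sigma>" and T: "{j*k+1..<j*k+1+1+k} \<subseteq> B"
  shows "{j*(k+1)+1..<j*(k+1)+1+(k+1)} \<in> \<pi>"
proof -
  define s where "s = j*(k+1)+1"
  define N where "N = n*(k+1)"
  have P: "partition_on {1..N} \<pi>" and cd: "\<forall>B\<in>\<pi>. card B = k+1"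
    using pi unfolding NC_lower_def N_def by (auto simp: algebra_simps)
  have S: "partition_on {1..k*n} \<sigma>" and SC: "\<forall>V\<in>\<pi>. \<exists>B\<in>\<sigma>. phi k n ` V \<subseteq> B"
    and Sfin: "\<And>\<tau>. compatible k n \<pi> \<tau> \<Longrightarrow> refines \<sigma> \<tau>"
    using F unfolding finest_def compatible_def by auto
  obtain n0 where n0: "n = Suc n0" "j < n0" using j by (cases n) auto
  have phiS: "phi k n ` {s..<s+(k+1)} = {j*k+1..<j*k+1+1+k}"
    using phi_img_A[OF k n0(2)] n0(1) unfolding s_def by simp
  have jn: "(j+1)*(k+1) + (k+1) \<le> n*(k+1)" using mult_step[of "j+1" n "k+1"] j by simp
  have "s + (k+1) \<le> N + 1" using jn unfolding s_def N_def by (simp add: algebra_simps)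
  then have SN: "{s..<s+(k+1)} \<subseteq> {1..N}" unfolding s_def by auto
  have "s \<in> {s..<s+(k+1)}" by simp
  then have s1: "s \<in> {1..N}" using SN by blast
  obtain V where V: "V \<in> \<pi>" "s \<in> V" using partition_ex_block[OF P s1] by blast
  have allin: "i < k+1 \<longrightarrow> s + i \<in> V" for i
  proof (induction i)
    case 0 then show ?case using V by simp
  next
    case (Suc i)
    show ?case
    proof
      assume i: "Suc i < k+1"
      define x where "x = s + i"
      have xV: "x \<in> V" using Suc i unfolding x_def by simp
      show "s + Suc i \<in> V"
      proof (rule ccontr)
        assume nx: "s + Suc i \<notin> V"
        have xmod: "x mod (k+1) \<noteq> 0"
        proof -
          have "x = (1 + i) + j*(k+1)" unfolding x_def s_def by simp
          then have "x mod (k+1) = (1+i) mod (k+1)"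
            using mod_shift_dvd[OF dvd_triv_right[of "k+1" j], of "1+i"] by simp
          also have "\<dots> = 1 + i" using i by simp
          finally show ?thesis by simp
        qed
        have "x + 1 \<in> {s..<s+(k+1)}" using i unfolding x_def by auto
        then have x1N: "x + 1 \<le> n*(k+1)" using SN unfolding N_def by auto
        obtain R where R: "R \<subseteq> {1..n*(k+1)}" "x+1 \<in> R" "x \<notin> R" "\<forall>W\<in>\<pi>. W \<subseteq> R \<or> W \<inter> R = {}"
          "\<forall>u\<in>R. \<forall>w\<in>{1..n*(k+1)} - R. phi k n u \<noteq> phi k n w"
          using region[OF k pi V(1) xV _ x1N xmod] nx unfolding x_def by auto
        define Q where "Q = phi k n ` R"
        have compat: "compatible k n \<pi> (splitp Q \<sigma>)"
          unfolding compatible_def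
        proof (intro conjI ballI)
          show "partition_on {1..k*n} (splitp Q \<sigma>)" by (rule split_partition[OF S])
          fix W assume W: "W \<in> \<pi>"
          obtain C where C: "C \<in> \<sigma>" "phi k n ` W \<subseteq> C" using SC W by blast
          have Wne: "W \<noteq> {}" using partition_nonempty[OF P W] .
          have WN: "W \<subseteq> {1..n*(k+1)}" using partition_block_sub[OF P W] unfolding N_def .
          show "\<exists>D\<in>splitp Q \<sigma>. phi k n ` W \<subseteq> D"
          proof (cases "W \<subseteq> R")
            case True
            then have "phi k n ` W \<subseteq> C \<inter> Q" using C unfolding Q_def by blast
            moreover have "C \<inter> Q \<in> splitp Q \<sigma>" using C(1) Wne \<open>phi k n ` W \<subseteq> C \<inter> Q\<close> unfolding splitp_def by blast
            ultimately show ?thesis by blast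
          next
            case False
            then have "W \<inter> R = {}" using R(4) W by blast
            have "phi k n ` W \<inter> Q = {}"
            proof (rule ccontr)
              assume "phi k n ` W \<inter> Q \<noteq> {}"
              then obtain z where "z \<in> phi k n ` W" "z \<in> Q" by blast
              then obtain w u where "w \<in> W" "u \<in> R" "phi k n u = phi k n w" unfolding Q_def by (metis imageE)
              moreover have "w \<in> {1..n*(k+1)} - R" using \<open>w \<in> W\<close> WN \<open>W \<inter> R = {}\<close> by blast
              ultimately show False using R(5) by blast
            qed
            then have "phi k n ` W \<subseteq> C - Q" using C by blast
            moreover have "C - Q \<in> splitp Q \<sigma>" using C(1) Wne \<open>phi k n ` W \<subseteq> C - Q\<close> unfolding splitp_def by blast
            ultimately show ?thesis by blast
          qed
        qed
        obtain D where D: "D \<in> splitp Q \<sigma>" "B \<subseteq> D" using Sfin[OF compat] B unfolding refines_def by blast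
        have xS: "x \<in> {s..<s+(k+1)}" "x+1 \<in> {s..<s+(k+1)}" using i unfolding x_def by auto
        have "phi k n x \<in> phi k n ` {s..<s+(k+1)}" "phi k n (x+1) \<in> phi k n ` {s..<s+(k+1)}"
          using imageI[OF xS(1)] imageI[OF xS(2)] by auto
        then have b1: "phi k n x \<in> D" "phi k n (x+1) \<in> D" using phiS T D(2) by auto
        have q1: "phi k n (x+1) \<in> Q" using R(2) unfolding Q_def by (rule imageI)
        have q2: "phi k n x \<notin> Q"
        proof
          assume "phi k n x \<in> Q"
          then obtain u where "u \<in> R" "phi k n u = phi k n x" unfolding Q_def by (metis imageE)
          moreover have "x \<in> {1..n*(k+1)} - R" using SN xS(1) R(3) unfolding N_def by blast
          ultimately show False using R(5) by blast
        qed
        obtain C where "C \<in> \<sigma>" and "D = C \<inter> Q \<or> D = C - Q" using D(1) unfolding splitp_def by blast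
        from this(2) show False
        proof
          assume "D = C \<inter> Q" then show False using b1 q2 by simp
        next
          assume "D = C - Q" then show False using b1 q1 by simp
        qed
      qed
    qed
  qed
  have "{s..<s+(k+1)} \<subseteq> V"
  proof
    fix y assume y: "y \<in> {s..<s+(k+1)}"
    then have "y - s < k+1" "y = s + (y - s)" by auto
    then show "y \<in> V" using allin[of "y - s"] by simp
  qed
  moreover have "card V = card {s..<s+(k+1)}" using cd V by simp
  moreover have "finite V" using partition_block_sub[OF P V(1)] finite_subset by blast
  ultimately have "V = {s..<s+(k+1)}" using card_subset_eq[of V "{s..<s+(k+1)}"] by simp
  then show ?thesis using V unfolding s_def by simp
qed




lemma insb_upper:
  assumes k: "0 < k" and S: "\<sigma> \<in> NC_upper k n" and b: "1 \<le> b" "b \<le> k*n+1"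
  shows "insb k b \<sigma> \<in> NC_upper k (Suc n)"
proof -
  have P: "partition_on {1..k*n} \<sigma>" and nc: "noncrossing \<sigma>" and cd: "\<forall>B\<in>\<sigma>. k dvd card B"
    using S unfolding NC_upper_def by auto
  have "partition_on {1..k*n+k} (insb k b \<sigma>)" using insb_partition[OF P b k] .
  moreover have "\<forall>B\<in>insb k b \<sigma>. k dvd card B" using insb_cards[of _ k b \<sigma>] cd by fastforce
  ultimately show ?thesis using insb_noncrossing[OF nc] unfolding NC_upper_def by (simp add: algebra_simps)
qed

lemma extb_upper:
  assumes k: "0 < k" and S: "\<sigma> \<in> NC_upper k n" and p: "1 \<le> p" "p \<le> k*n"
  shows "extb k p \<sigma> \<in> NC_upper k (Suc n)"
proof -
  have P: "partition_on {1..k*n} \<sigma>" and nc: "noncrossing \<sigma>" and cd: "\<forall>B\<in>\<sigma>. k dvd card B"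
    using S unfolding NC_upper_def by auto
  have "partition_on {1..k*n+k} (extb k p \<sigma>)" using extb_partition[OF P p] .
  moreover have "\<forall>B\<in>extb k p \<sigma>. k dvd card B"
  proof
    fix B assume "B \<in> extb k p \<sigma>"
    then obtain C where C: "C \<in> \<sigma>" "B = extB k p C" unfolding extb_def by blast
    have "finite C" using partition_block_sub[OF P C(1)] finite_subset by blast
    then have "card B = card C + (if p \<in> C then k else 0)" using extB_card C by simp
    then show "k dvd card B" using cd C(1) by simp
  qed
  ultimately show ?thesis using extb_noncrossing[OF P nc] unfolding NC_upper_def by (simp add: algebra_simps)
qed

lemma insb_lower:
  assumes k: "0 < k" and pi: "\<pi> \<in> NC_lower (k+1) n" and a: "1 \<le> a" "a \<le> (k+1)*n+1"
  shows "insb (k+1) a \<pi> \<in> NC_lower (k+1) (Suc n)"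
proof -
  have P: "partition_on {1..(k+1)*n} \<pi>" and nc: "noncrossing \<pi>" and cd: "\<forall>B\<in>\<pi>. card B = k+1"
    using pi unfolding NC_lower_def by auto
  have "partition_on {1..(k+1)*n+(k+1)} (insb (k+1) a \<pi>)" using insb_partition[OF P a, of "k+1"] by simp
  moreover have "\<forall>B\<in>insb (k+1) a \<pi>. card B = k+1" using insb_cards[of _ "k+1" a \<pi>] cd by fastforce
  ultimately show ?thesis using insb_noncrossing[OF nc] unfolding NC_lower_def by (simp add: algebra_simps)
qed

lemma rem_lower:
  assumes k: "0 < k" and pi: "\<pi> \<in> NC_lower (k+1) (Suc n)" and I: "{a..<a+(k+1)} \<in> \<pi>"
    and a: "1 \<le> a" "a \<le> (k+1)*n+1"
  shows "remb (k+1) a \<pi> \<in> NC_lower (k+1) n \<and> \<pi> = insb (k+1) a (remb (k+1) a \<pi>)"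
proof -
  have P: "partition_on {1..(k+1)*n + (k+1)} \<pi>" and nc: "noncrossing \<pi>" and cd: "\<forall>B\<in>\<pi>. card B = k+1"
    using pi unfolding NC_lower_def by (auto simp: algebra_simps)
  interpret R: rembloc "(k+1)*n" "k+1" a \<pi>
    by unfold_locales (use P I a in auto)
  show ?thesis using R.part R.nc[OF nc] R.eq R.cards cd unfolding NC_lower_def by fastforce
qed

lemma remb_insb: "0 < L \<Longrightarrow> remb L a (insb L a X) = X"
proof -
  assume L: "0 < L"
  have "sh L a ` B \<noteq> {a..<a+L}" for B
  proof
    assume "sh L a ` B = {a..<a+L}"
    then have "a \<in> sh L a ` B" using L by auto
    then obtain x where "a = sh L a x" by blast
    moreover have "a \<in> {a..<a+L}" using L by simp
    ultimately show False using sh_notin[of L a x] by simp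
  qed
  then have "insb L a X - {{a..<a+L}} = (`) (sh L a) ` X" unfolding insb_def by auto
  then show ?thesis unfolding remb_def by (simp add: image_image)
qed

lemma rexb_extb: "rexb L p (extb L p X) = X"
proof -
  have "rexB L p (extB L p B) = B" for B
  proof -
    have "extB L p B - {p+1..<p+1+L} = sh L (p+1) ` B"
      using sh_notin[of L "p+1"] unfolding extB_def by auto
    then show ?thesis unfolding rexB_def by (simp add: image_image)
  qed
  then show ?thesis unfolding rexb_def extb_def image_image by simp
qed

lemma forward:
  assumes k: "0 < k"
  shows "\<pi> \<in> NC_lower (k+1) (Suc n) \<Longrightarrow> \<exists>\<sigma>\<in>NC_upper k (Suc n). finest k (Suc n) \<pi> \<sigma>"
proof (induction n arbitrary: \<pi>)
  case 0
  then have "\<pi> = {{1..k+1}}" using NC_lower_1 by simp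
  moreover have "{{1..k}} \<in> NC_upper k 1"
    unfolding NC_upper_def noncrossing_def using k by (auto simp: partition_on_space)
  ultimately show ?case using base_finest[OF k] by auto
next
  case (Suc n)
  obtain j r \<pi>' where d: "\<pi>' \<in> NC_lower (k+1) (Suc n)" "j < Suc n" "1 \<le> r" "r \<le> k+1"
    "\<pi> = insb (k+1) (j*(k+1)+r) \<pi>'"
    using decomp_lower[OF k _ Suc.prems] by blast
  obtain \<sigma>' where s': "\<sigma>' \<in> NC_upper k (Suc n)" "finest k (Suc n) \<pi>' \<sigma>'" using Suc.IH[OF d(1)] by blast
  have P': "partition_on {1..(k+1)*Suc n} \<pi>'" using d(1) unfolding NC_lower_def by simp
  have jk: "j*k + k \<le> Suc n * k" using mult_step[OF d(2)] .
  show ?case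
  proof (cases "r = 1")
    case True
    have "finest k (Suc (Suc n)) \<pi> (extb k (j*k+1) \<sigma>')"
      using step_A[OF k d(2) P' s'(2)] d(5) True by simp
    moreover have "extb k (j*k+1) \<sigma>' \<in> NC_upper k (Suc (Suc n))"
    proof (rule extb_upper[OF k s'(1)])
      have "Suc n * k = k * Suc n" by (rule mult.commute)
      then show "1 \<le> j*k+1" "j*k+1 \<le> k * Suc n" using jk k by linarith+
    qed
    ultimately show ?thesis by blast
  next
    case False
    then have r2: "2 \<le> r" using d(3) by simp
    have "finest k (Suc (Suc n)) \<pi> (insb k (j*k+r) \<sigma>')"
      using step_B[OF k d(2) r2 d(4) P' s'(2)] d(5) by simp
    moreover have "insb k (j*k+r) \<sigma>' \<in> NC_upper k (Suc (Suc n))"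
    proof (rule insb_upper[OF k s'(1)])
      have "Suc n * k = k * Suc n" by (rule mult.commute)
      then show "1 \<le> j*k+r" "j*k+r \<le> k * Suc n + 1" using jk d(4) r2 by linarith+
    qed
    ultimately show ?thesis by blast
  qed
qed

lemma surj_part:
  assumes k: "0 < k"
  shows "\<sigma> \<in> NC_upper k (Suc n) \<Longrightarrow> \<exists>\<pi>\<in>NC_lower (k+1) (Suc n). finest k (Suc n) \<pi> \<sigma>"
proof (induction n arbitrary: \<sigma>)
  case 0
  then have "\<sigma> = {{1..k}}" using NC_upper_1 k by simp
  moreover have "{{1..k+1}} \<in> NC_lower (k+1) 1"
    unfolding NC_lower_def noncrossing_def by (auto simp: partition_on_space)
  ultimately show ?case using base_finest[OF k] by auto
next
  case (Suc n)
  obtain j \<sigma>' where d: "\<sigma>' \<in> NC_upper k (Suc n)" "j < Suc n"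
     "(\<exists>r. 2 \<le> r \<and> r \<le> k+1 \<and> {j*k+r..<j*k+r+k} \<in> \<sigma> \<and> \<sigma> = insb k (j*k+r) \<sigma>') \<or>
      ((\<exists>B\<in>\<sigma>. {j*k+1..<j*k+1+1+k} \<subseteq> B) \<and> \<sigma> = extb k (j*k+1) \<sigma>')"
    using decomp_upper[OF k _ Suc.prems] by blast
  obtain \<pi>' where p': "\<pi>' \<in> NC_lower (k+1) (Suc n)" "finest k (Suc n) \<pi>' \<sigma>'" using Suc.IH[OF d(1)] by blast
  have P': "partition_on {1..(k+1)*Suc n} \<pi>'" using p'(1) unfolding NC_lower_def by simp
  have jk: "j*(k+1) + (k+1) \<le> Suc n * (k+1)" using mult_step[OF d(2)] .
  from d(3) show ?case
  proof
    assume "\<exists>r. 2 \<le> r \<and> r \<le> k+1 \<and> {j*k+r..<j*k+r+k} \<in> \<sigma> \<and> \<sigma> = insb k (j*k+r) \<sigma>'"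
    then obtain r where r: "2 \<le> r" "r \<le> k+1" "\<sigma> = insb k (j*k+r) \<sigma>'" by blast
    have "finest k (Suc (Suc n)) (insb (k+1) (j*(k+1)+r) \<pi>') \<sigma>"
      using step_B[OF k d(2) r(1,2) P' p'(2)] r(3) by simp
    moreover have "insb (k+1) (j*(k+1)+r) \<pi>' \<in> NC_lower (k+1) (Suc (Suc n))"
      by (rule insb_lower[OF k p'(1)]) (use jk r in \<open>auto simp: algebra_simps\<close>)
    ultimately show ?thesis by blast
  next
    assume "(\<exists>B\<in>\<sigma>. {j*k+1..<j*k+1+1+k} \<subseteq> B) \<and> \<sigma> = extb k (j*k+1) \<sigma>'"
    then have e: "\<sigma> = extb k (j*k+1) \<sigma>'" by blast
    have "finest k (Suc (Suc n)) (insb (k+1) (j*(k+1)+1) \<pi>') \<sigma>"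
      using step_A[OF k d(2) P' p'(2)] e by simp
    moreover have "insb (k+1) (j*(k+1)+1) \<pi>' \<in> NC_lower (k+1) (Suc (Suc n))"
      by (rule insb_lower[OF k p'(1)]) (use jk in \<open>auto simp: algebra_simps\<close>)
    ultimately show ?thesis by blast
  qed
qed




lemma inj_part:
  assumes k: "0 < k"
  shows "\<pi>1 \<in> NC_lower (k+1) (Suc n) \<Longrightarrow> \<pi>2 \<in> NC_lower (k+1) (Suc n) \<Longrightarrow>
         finest k (Suc n) \<pi>1 \<sigma> \<Longrightarrow> finest k (Suc n) \<pi>2 \<sigma> \<Longrightarrow> \<pi>1 = \<pi>2"
proof (induction n arbitrary: \<pi>1 \<pi>2 \<sigma>)
  case 0
  have "\<pi>1 \<in> NC_lower (k+1) 1" "\<pi>2 \<in> NC_lower (k+1) 1" using "0.prems"(1,2) by simp_all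
  then show ?case using NC_lower_1 by metis
next
  case (Suc n)
  obtain \<sigma>1 where "\<sigma>1 \<in> NC_upper k (Suc (Suc n))" "finest k (Suc (Suc n)) \<pi>1 \<sigma>1"
    using forward[OF k Suc.prems(1)] by blast
  then have S: "\<sigma> \<in> NC_upper k (Suc (Suc n))" using finest_unique Suc.prems(3) by metis
  obtain j \<sigma>' where d: "\<sigma>' \<in> NC_upper k (Suc n)" "j < Suc n"
     "(\<exists>r. 2 \<le> r \<and> r \<le> k+1 \<and> {j*k+r..<j*k+r+k} \<in> \<sigma> \<and> \<sigma> = insb k (j*k+r) \<sigma>') \<or>
      ((\<exists>B\<in>\<sigma>. {j*k+1..<j*k+1+1+k} \<subseteq> B) \<and> \<sigma> = extb k (j*k+1) \<sigma>')"
    using decomp_upper[OF k _ S] by blast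
  have jk: "j*(k+1) + (k+1) \<le> Suc n * (k+1)" using mult_step[OF d(2)] .
  have sj: "Suc j < Suc (Suc n)" using d(2) by simp
  from d(3) show ?case
  proof
    assume "\<exists>r. 2 \<le> r \<and> r \<le> k+1 \<and> {j*k+r..<j*k+r+k} \<in> \<sigma> \<and> \<sigma> = insb k (j*k+r) \<sigma>'"
    then obtain r where r: "2 \<le> r" "r \<le> k+1" "{j*k+r..<j*k+r+k} \<in> \<sigma>" by blast
    define a where "a = j*(k+1)+r"
    have a: "1 \<le> a" "a \<le> (k+1)*Suc n+1" using jk r unfolding a_def by (auto simp: algebra_simps)
    have red: "\<exists>\<pi>'. \<pi>' \<in> NC_lower (k+1) (Suc n) \<and> \<pi> = insb (k+1) a \<pi>' \<and>
                 (\<exists>\<sigma>'. finest k (Suc n) \<pi>' \<sigma>' \<and> \<sigma> = insb k (j*k+r) \<sigma>')"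
      if pi: "\<pi> \<in> NC_lower (k+1) (Suc (Suc n))" and F: "finest k (Suc (Suc n)) \<pi> \<sigma>" for \<pi>
    proof -
      have "{a..<a+(k+1)} \<in> \<pi>"
        using forced_B[OF k sj r(1,2) pi _ r(3)] F unfolding finest_def a_def by blast
      then have R: "remb (k+1) a \<pi> \<in> NC_lower (k+1) (Suc n)" "\<pi> = insb (k+1) a (remb (k+1) a \<pi>)"
        using rem_lower[OF k pi _ a] by auto
      obtain \<sigma>'' where s'': "finest k (Suc n) (remb (k+1) a \<pi>) \<sigma>''" using forward[OF k R(1)] by blast
      have P': "partition_on {1..(k+1)*Suc n} (remb (k+1) a \<pi>)" using R(1) unfolding NC_lower_def by simp
      have "finest k (Suc (Suc n)) \<pi> (insb k (j*k+r) \<sigma>'')"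
        using step_B[OF k d(2) r(1,2) P' s''] R(2) unfolding a_def by simp
      then have "\<sigma> = insb k (j*k+r) \<sigma>''" using finest_unique F by metis
      then show ?thesis using R s'' by blast
    qed
    obtain \<pi>1' \<sigma>1' where A1: "\<pi>1' \<in> NC_lower (k+1) (Suc n)" "\<pi>1 = insb (k+1) a \<pi>1'"
      "finest k (Suc n) \<pi>1' \<sigma>1'" "\<sigma> = insb k (j*k+r) \<sigma>1'"
      using red[OF Suc.prems(1,3)] by blast
    obtain \<pi>2' \<sigma>2' where A2: "\<pi>2' \<in> NC_lower (k+1) (Suc n)" "\<pi>2 = insb (k+1) a \<pi>2'"
      "finest k (Suc n) \<pi>2' \<sigma>2'" "\<sigma> = insb k (j*k+r) \<sigma>2'"
      using red[OF Suc.prems(2,4)] by blast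
    have "\<sigma>1' = \<sigma>2'" using A1(4) A2(4) remb_insb[OF k, of "j*k+r"] by metis
    then have "\<pi>1' = \<pi>2'" using Suc.IH[OF A1(1) A2(1) A1(3)] A2(3) by simp
    then show ?thesis using A1(2) A2(2) by simp
  next
    assume "(\<exists>B\<in>\<sigma>. {j*k+1..<j*k+1+1+k} \<subseteq> B) \<and> \<sigma> = extb k (j*k+1) \<sigma>'"
    then obtain B where B: "B \<in> \<sigma>" "{j*k+1..<j*k+1+1+k} \<subseteq> B" by blast
    define a where "a = j*(k+1)+1"
    have a: "1 \<le> a" "a \<le> (k+1)*Suc n+1" using jk unfolding a_def by (auto simp: algebra_simps)
    have red: "\<exists>\<pi>'. \<pi>' \<in> NC_lower (k+1) (Suc n) \<and> \<pi> = insb (k+1) a \<pi>' \<and>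
                 (\<exists>\<sigma>'. finest k (Suc n) \<pi>' \<sigma>' \<and> \<sigma> = extb k (j*k+1) \<sigma>')"
      if pi: "\<pi> \<in> NC_lower (k+1) (Suc (Suc n))" and F: "finest k (Suc (Suc n)) \<pi> \<sigma>" for \<pi>
    proof -
      have "{a..<a+(k+1)} \<in> \<pi>"
        using forced_A[OF k sj pi F B] unfolding a_def by simp
      then have R: "remb (k+1) a \<pi> \<in> NC_lower (k+1) (Suc n)" "\<pi> = insb (k+1) a (remb (k+1) a \<pi>)"
        using rem_lower[OF k pi _ a] by auto
      obtain \<sigma>'' where s'': "finest k (Suc n) (remb (k+1) a \<pi>) \<sigma>''" using forward[OF k R(1)] by blast
      have P': "partition_on {1..(k+1)*Suc n} (remb (k+1) a \<pi>)" using R(1) unfolding NC_lower_def by simp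
      have "finest k (Suc (Suc n)) \<pi> (extb k (j*k+1) \<sigma>'')"
        using step_A[OF k d(2) P' s''] R(2) unfolding a_def by simp
      then have "\<sigma> = extb k (j*k+1) \<sigma>''" using finest_unique F by metis
      then show ?thesis using R s'' by blast
    qed
    obtain \<pi>1' \<sigma>1' where A1: "\<pi>1' \<in> NC_lower (k+1) (Suc n)" "\<pi>1 = insb (k+1) a \<pi>1'"
      "finest k (Suc n) \<pi>1' \<sigma>1'" "\<sigma> = extb k (j*k+1) \<sigma>1'"
      using red[OF Suc.prems(1,3)] by blast
    obtain \<pi>2' \<sigma>2' where A2: "\<pi>2' \<in> NC_lower (k+1) (Suc n)" "\<pi>2 = insb (k+1) a \<pi>2'"
      "finest k (Suc n) \<pi>2' \<sigma>2'" "\<sigma> = extb k (j*k+1) \<sigma>2'"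
      using red[OF Suc.prems(2,4)] by blast
    have "\<sigma>1' = \<sigma>2'" using A1(4) A2(4) rexb_extb[of k "j*k+1"] by metis
    then have "\<pi>1' = \<pi>2'" using Suc.IH[OF A1(1) A2(1) A1(3)] A2(3) by simp
    then show ?thesis using A1(2) A2(2) by simp
  qed
qed

theorem lemma5p1:
  fixes n k :: nat
  assumes "0 < n" and "0 < k"
  shows "(\<forall>\<pi>\<in>NC_lower (k+1) n. fmap k n \<pi> \<in> NC_upper k n)
         \<and> bij_betw (fmap k n) (NC_lower (k+1) n) (NC_upper k n)"
proof -
  obtain n0 where n0: "n = Suc n0" using assms(1) by (cases n) auto
  have k: "0 < k" by (rule assms(2))
  have fw: "fmap k n \<pi> \<in> NC_upper k n \<and> finest k n \<pi> (fmap k n \<pi>)" if "\<pi> \<in> NC_lower (k+1) n" for \<pi>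
  proof -
    have "\<exists>\<sigma>\<in>NC_upper k n. finest k n \<pi> \<sigma>" using forward[OF k, of \<pi> n0] that n0 by simp
    then obtain \<sigma> where "\<sigma> \<in> NC_upper k n" "finest k n \<pi> \<sigma>" by blast
    then show ?thesis using fmap_eq by metis
  qed
  have inj: "inj_on (fmap k n) (NC_lower (k+1) n)"
  proof (rule inj_onI)
    fix \<pi>1 \<pi>2 assume p: "\<pi>1 \<in> NC_lower (k+1) n" "\<pi>2 \<in> NC_lower (k+1) n" and e: "fmap k n \<pi>1 = fmap k n \<pi>2"
    have "finest k n \<pi>1 (fmap k n \<pi>1)" "finest k n \<pi>2 (fmap k n \<pi>1)" using fw p e by metis+
    then show "\<pi>1 = \<pi>2" using inj_part[OF k, of \<pi>1 n0 \<pi>2] p n0 by simp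
  qed
  have img: "fmap k n ` NC_lower (k+1) n = NC_upper k n"
  proof
    show "fmap k n ` NC_lower (k+1) n \<subseteq> NC_upper k n" using fw by blast
    show "NC_upper k n \<subseteq> fmap k n ` NC_lower (k+1) n"
    proof
      fix \<sigma> assume "\<sigma> \<in> NC_upper k n"
      then have "\<exists>\<pi>\<in>NC_lower (k+1) n. finest k n \<pi> \<sigma>" using surj_part[OF k, of \<sigma> n0] n0 by simp
      then obtain \<pi> where "\<pi> \<in> NC_lower (k+1) n" "finest k n \<pi> \<sigma>" by blast
      then show "\<sigma> \<in> fmap k n ` NC_lower (k+1) n" using fmap_eq by (metis imageI)
    qed
  qed
  show ?thesis using fw inj img unfolding bij_betw_def by blast
qed


end
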